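(* Consider the following single-relay network model. Let $q$ be a prime power, $K\ge1$, $N_{\mathrm S}\ge K$, $N_{\mathrm R}\ge1$. A source S draws $N_{\mathrm S}$ coefficient vectors i.i.d. uniformly from $\mathbb{F}_q^K$ and broadcasts one packet per vector; each packet is erased on the link S$\to$D with probability $\epsilon_{\mathrm{SD}}$ and on the link S$\to$R with probability $\epsilon_{\mathrm{SR}}$, all erasures independent and independent of the coefficients. The relay R, having received $m_1$ packets with coefficient matrix $\mathbf{C}_{\mathrm S\to\mathrm R}\in\mathbb{F}_q^{m_1\times K}$, draws $\mathbf{G}\in\mathbb{F}_q^{N_{\mathrm R}\times m_1}$ with i.i.d. uniform entries and transmits the $N_{\mathrm R}$ rows of $\mathbf{G}\mathbf{C}_{\mathrm S\to\mathrm R}$ to D, each independently erased with probability $\epsilon_{\mathrm{RD}}$. D stacks all coefficient vectors received into $\mathbf{C}_{\mathrm D}$; decoding succeeds iff $\operatorname{rank}(\mathbf{C}_{\mathrm D})=K$, and $P^{(1)}_{\mathrm R}$ denotes its probability. Then $$P^{(1)}_{\mathrm R}=\sum_{(m,m_{\mathrm D},m_{\mathrm{RD}})}\alpha(m,m_{\mathrm D},m_{\mathrm{RD}})\sum_{m'}\mathcal{B}(m',N_{\mathrm R},\epsilon_{\mathrm{RD}})\;\mathbb{P}^{(2)}\big(m'+m_{\mathrm D},\,m-m_{\mathrm{RD}}+m_{\mathrm D},\,m_{\mathrm D};K\big),$$ where $$\alpha(m,m_{\mathrm D},m_{\mathrm{RD}})=\binom{N_{\mathrm S}}{m_{\mathrm{RD}}}\binom{N_{\mathrm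 S}-m_{\mathrm{RD}}}{m-m_{\mathrm{RD}}}\binom{N_{\mathrm S}-m}{m_{\mathrm D}-m_{\mathrm{RD}}}(1-\epsilon_{\mathrm{SR}})^{m}\epsilon_{\mathrm{SR}}^{\,N_{\mathrm S}-m}(1-\epsilon_{\mathrm{SD}})^{m_{\mathrm D}}\epsilon_{\mathrm{SD}}^{\,N_{\mathrm S}-m_{\mathrm D}},$$ $\mathcal{B}(k,N,\epsilon)=\binom{N}{k}(1-\epsilon)^k\epsilon^{N-k}$, the sums range over integers with $m+m_{\mathrm D}\ge K$, $m,m_{\mathrm D}\le N_{\mathrm S}$, $\max(0,m+m_{\mathrm D}-N_{\mathrm S})\le m_{\mathrm{RD}}\le\min(m,m_{\mathrm D})$, and $\max(0,K-m_{\mathrm D})\le m'\le N_{\mathrm R}$; and $\mathbb{P}^{(2)}(m_1,m_2,m_{12};K)=\sum_{i=\max(0,K-m_1+m_{12},K-m_2+m_{12})}^{\min(m_{12},K)}\mathbb{P}_i(m_{12},K)\,\mathbb{P}(m_1-m_{12},K-i)\,\mathbb{P}(m_2-m_{12},K-i)$ with $\mathbb{P}(a,b)=\prod_{i=0}^{b-1}(1-q^{i-a})$ and $\mathbb{P}_r(a,b)=q^{-a(b-r)}\prod_{i=0}^{r-1}\frac{q^{b-i}-1}{q^{r-i}-1}\prod_{i=0}^{r-1}(1-q^{i-a})$.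
   Context: $\mathbb{P}(a,b)$ (resp. $\mathbb{P}_r(a,b)$) is the probability that an $a\times b$ matrix with i.i.d. uniform entries from $\mathbb{F}_q$ has rank $b$ (resp. $r$). In the sum, $m$ is the number of source packets received by R, $m_{\mathrm D}$ the number received by D from S, $m_{\mathrm{RD}}$ the number received by both, and $m'$ the number of recoded packets D receives from R. *)

theory Defs
  imports "HOL-Probability.Product_PMF" "Jordan_Normal_Form.DL_Rank"
begin

text \<open>Rank of a matrix over a field: dimension of its row space
  (= dimension of the column space of its transpose), K = length of the rows.\<close>
definition row_rank :: "nat \<Rightarrow> 'a::field mat \<Rightarrow> nat" where
  "row_rank K C = vec_space.rank K (transpose_mat C)"

definition sel_rows :: "nat \<Rightarrow> 'a mat \<Rightarrow> nat list \<Rightarrow> 'a vec list" where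
  "sel_rows K C js = map (row C) js"

text \<open>The random single-relay experiment; returns True iff D decodes
  (rank of C_D equals K).  Erasure indicators: True = erased.\<close>
definition relay_success ::
  "'a::{finite,field} itself \<Rightarrow> nat \<Rightarrow> nat \<Rightarrow> nat \<Rightarrow> real \<Rightarrow> real \<Rightarrow> real \<Rightarrow> bool pmf" where
  "relay_success ty K NS NR eSD eSR eRD = do {
     C \<leftarrow> pmf_of_set (carrier_mat NS K :: 'a mat set);
     erSD \<leftarrow> Pi_pmf {..<NS} False (\<lambda>_. bernoulli_pmf eSD);
     erSR \<leftarrow> Pi_pmf {..<NS} False (\<lambda>_. bernoulli_pmf eSR);
     let jsR = filter (\<lambda>j. \<not> erSR j) [0..<NS];
     let m1 = length jsR;
     let CSR = mat_of_rows K (sel_rows K C jsR);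
     G \<leftarrow> pmf_of_set (carrier_mat NR m1 :: 'a mat set);
     let CR = G * CSR;
     erRD \<leftarrow> Pi_pmf {..<NR} False (\<lambda>_. bernoulli_pmf eRD);
     let CD = mat_of_rows K (sel_rows K C (filter (\<lambda>j. \<not> erSD j) [0..<NS])
                             @ sel_rows K CR (filter (\<lambda>i. \<not> erRD i) [0..<NR]));
     return_pmf (row_rank K CD = K)
   }"

text \<open>P(a,b): probability an a x b uniform matrix over F_q has rank b.\<close>
definition Pfull :: "nat \<Rightarrow> nat \<Rightarrow> nat \<Rightarrow> real" where
  "Pfull q a b = (\<Prod>i<b. 1 - real q powi (int i - int a))"

text \<open>P_r(a,b): probability an a x b uniform matrix over F_q has rank r.\<close>
definition Prank :: "nat \<Rightarrow> nat \<Rightarrow> nat \<Rightarrow> nat \<Rightarrow> real" where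
  "Prank q r a b = real q powi (- (int a * (int b - int r)))
     * (\<Prod>i<r. (real q ^ (b - i) - 1) / (real q ^ (r - i) - 1))
     * (\<Prod>i<r. 1 - real q powi (int i - int a))"

definition P2 :: "nat \<Rightarrow> nat \<Rightarrow> nat \<Rightarrow> nat \<Rightarrow> nat \<Rightarrow> real" where
  "P2 q m1 m2 m12 K =
     (\<Sum>i \<in> {nat (max 0 (max (int K - int m1 + int m12) (int K - int m2 + int m12)))..min m12 K}.
        Prank q i m12 K * Pfull q (m1 - m12) (K - i) * Pfull q (m2 - m12) (K - i))"

definition Bin :: "nat \<Rightarrow> nat \<Rightarrow> real \<Rightarrow> real" where
  "Bin k N e = real (N choose k) * (1 - e) ^ k * e ^ (N - k)"

definition alpha :: "nat \<Rightarrow> real \<Rightarrow> real \<Rightarrow> nat \<Rightarrow> nat \<Rightarrow> nat \<Rightarrow> real" where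
  "alpha NS eSR eSD m mD mRD =
     real (NS choose mRD) * real ((NS - mRD) choose (m - mRD)) * real ((NS - m) choose (mD - mRD))
     * (1 - eSR) ^ m * eSR ^ (NS - m) * (1 - eSD) ^ mD * eSD ^ (NS - mD)"

end

theory Submission
  imports Defs
begin


lemma powi_diff_nat: "(x::real) \<noteq> 0 \<Longrightarrow> x powi (int i - int j) = x ^ i / x ^ j"
  by (simp add: power_int_diff)

lemma Pfull_alt: "q > 0 \<Longrightarrow> Pfull q a b = (\<Prod>i<b. 1 - real q ^ i / real q ^ a)"
  unfolding Pfull_def by (simp add: powi_diff_nat)

lemma Pfull_0[simp]: "Pfull q a 0 = 1" by (simp add: Pfull_def)

lemma Pfull_a0: "c \<ge> 1 \<Longrightarrow> Pfull q 0 c = 0"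
  unfolding Pfull_def by (rule prod_zero) (auto intro!: bexI[of _ 0])

lemma powi_neg_nat: "real q powi (- int c) = 1 / real q ^ c"
proof -
  have "real q powi (- int c) = inverse (real q powi (int c))" by (rule power_int_minus)
  then show ?thesis by (simp add: divide_inverse)
qed

lemma Pfull_rec:
  assumes q: "q > 0" and c: "c \<ge> 1"
  shows "Pfull q (Suc a) c = real q powi (- int c) * Pfull q a c + (1 - real q powi (- int c)) * Pfull q a (c - 1)"
proof -
  obtain c' where c': "c = Suc c'" using c by (cases c) auto
  define x where "x = real q"
  have x: "x > 0" using q by (simp add: x_def)
  have e1: "Pfull q (Suc a) c = (1 - 1 / x ^ Suc a) * Pfull q a c'"
    unfolding Pfull_alt[OF q] c' prod.lessThan_Suc_shift x_def[symmetric]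
    using x by (simp add: field_simps)
  have e2: "Pfull q a c = Pfull q a c' * (1 - x ^ c' / x ^ a)"
    unfolding Pfull_alt[OF q] c' x_def by simp
  have "real q powi (- int c) = inverse (real q powi (int c))" by (rule power_int_minus)
  then have e3: "real q powi (- int c) = 1 / x ^ Suc c'"
    by (simp add: x_def divide_inverse c' del: of_nat_Suc)
  show ?thesis unfolding e1 e2 e3 using x c' by (simp add: field_simps)
qed


definition Nq :: "nat \<Rightarrow> nat \<Rightarrow> nat \<Rightarrow> real" where "Nq q K r = (\<Prod>i<r. real q ^ (K - i) - 1)"
definition Dq :: "nat \<Rightarrow> nat \<Rightarrow> real" where "Dq q r = (\<Prod>j<r. real q ^ (Suc j) - 1)"

lemma Dq_nz: assumes "q > 1" shows "Dq q r \<noteq> 0"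
proof -
  have "\<And>j. real q ^ Suc j > 1" using assms by (intro one_less_power) simp_all
  then show ?thesis unfolding Dq_def by (simp add: prod_zero_iff) (metis less_irrefl)
qed

lemma Prank_alt:
  assumes q: "q > 1" and r: "r \<le> K"
  shows "Prank q r a K = Pfull q a r * Nq q K r / (Dq q r * real q ^ (a * (K - r)))"
proof -
  have q0: "real q > 0" using q by simp
  have e1: "real q powi (- (int a * (int K - int r))) = 1 / real q ^ (a * (K - r))"
  proof -
    have h: "int a * (int K - int r) = int (a * (K - r))" using r by (simp add: of_nat_diff)
    show ?thesis unfolding h power_int_minus power_int_of_nat by (simp add: divide_inverse)
  qed
  have e2: "(\<Prod>i<r. (real q ^ (K - i) - 1) / (real q ^ (r - i) - 1)) = Nq q K r / Dq q r"
  proof -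
    have "(\<Prod>i<r. real q ^ (r - i) - 1) = (\<Prod>i<r. real q ^ Suc (r - Suc i) - 1)"
      by (rule prod.cong) (auto simp: Suc_diff_Suc)
    also have "\<dots> = Dq q r" unfolding Dq_def by (rule prod.nat_diff_reindex)
    finally show ?thesis unfolding Nq_def by (simp add: prod_dividef)
  qed
  have e3: "(\<Prod>i<r. 1 - real q powi (int i - int a)) = Pfull q a r" by (simp add: Pfull_def)
  show ?thesis unfolding Prank_def e1 e2 e3 by (simp add: mult_ac)
qed

lemma Prank_base: "q > 1 \<Longrightarrow> r \<le> K \<Longrightarrow> Prank q r 0 K = (if r = 0 then 1 else 0)"
  by (auto simp: Prank_alt Pfull_a0 Nq_def Dq_def)

lemma Prank_rec:
  assumes q: "q > 1" and r: "Suc r' \<le> K"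
  shows "Prank q (Suc r') (Suc a) K = (real q ^ Suc r' / real q ^ K) * Prank q (Suc r') a K
           + (1 - real q ^ r' / real q ^ K) * Prank q r' a K"
proof -
  define x where "x = real q"
  have x: "x > 1" using q by (simp add: x_def)
  obtain s where K: "K = Suc r' + s" using r le_Suc_ex by blast
  define A where "A = x ^ a"
  define S where "S = x ^ s"
  define R where "R = x ^ r'"
  define B where "B = A ^ s"
  define P where "P = Pfull q a r'"
  define Nn where "Nn = Nq q K r'"
  define Dd where "Dd = Dq q r'"
  have pos: "A > 0" "S > 0" "R > 0" "B > 0" using x by (auto simp: A_def S_def R_def B_def)
  have Dd: "Dd \<noteq> 0" unfolding Dd_def using Dq_nz[OF q] .
  have xR: "x * R - 1 \<noteq> 0"
  proof -
    have "x * R > 1" using one_less_power[OF x, of "Suc r'"] unfolding R_def by simp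
    then show ?thesis by simp
  qed
  have q0: "q > 0" using q by simp
  have p1: "Pfull q (Suc a) (Suc r') = (1 - 1 / (x * A)) * P"
    unfolding Pfull_alt[OF q0] prod.lessThan_Suc_shift x_def[symmetric] P_def A_def
    using x by (simp add: field_simps)
  have p2: "Pfull q a (Suc r') = P * (1 - R / A)"
    unfolding Pfull_alt[OF q0] P_def x_def R_def A_def by simp
  have n1: "Nq q K (Suc r') = Nn * (x * S - 1)"
    unfolding Nq_def Nn_def x_def S_def K by simp
  have d1: "Dq q (Suc r') = Dd * (x * R - 1)"
    unfolding Dq_def Dd_def x_def R_def by simp
  have w1: "x ^ (Suc a * (K - Suc r')) = B * S" unfolding K B_def A_def S_def
    by (simp add: power_mult[symmetric] power_add[symmetric] algebra_simps)
  have w2: "x ^ (a * (K - Suc r')) = B" unfolding K B_def A_def by (simp add: power_mult)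
  have w3: "x ^ (a * (K - r')) = B * A" unfolding K B_def A_def
    by (simp add: power_mult[symmetric] power_add[symmetric] algebra_simps)
  have w4: "x ^ K = x * R * S" unfolding K R_def S_def by (simp add: power_add)
  have w5: "x ^ Suc r' = x * R" unfolding R_def by simp
  show ?thesis
    unfolding Prank_alt[OF q r] Prank_alt[OF q order.refl[THEN le_trans[OF _ r[unfolded Suc_le_eq, THEN less_imp_le]]]]
    unfolding x_def[symmetric] p1 p2 n1 d1 w1 w2 w3 w4 w5 P_def[symmetric] Nn_def[symmetric] Dd_def[symmetric] R_def[symmetric]
    using pos Dd xR x
    by (simp add: field_simps)
qed

lemma Prank_rec0:
  assumes q: "q > 1"
  shows "Prank q 0 (Suc a) K = (1 / real q ^ K) * Prank q 0 a K"
  using q by (simp add: Prank_alt Nq_def Dq_def power_add[symmetric])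


lemma Pfull_rec':
  assumes q: "q > 0" and c: "c \<ge> 1"
  shows "Pfull q (Suc a) c = (1 / real q ^ c) * Pfull q a c + (1 - 1 / real q ^ c) * Pfull q a (c - 1)"
  using Pfull_rec[OF assms] by (simp add: powi_neg_nat)

lemma prob_bind_pmf:
  "measure_pmf.prob (bind_pmf M N) X = measure_pmf.expectation M (\<lambda>x. measure_pmf.prob (N x) X)"
proof -
  have "measure_pmf.prob (bind_pmf M N) X = pmf (map_pmf (\<lambda>x. x \<in> X) (bind_pmf M N)) True"
    by (simp add: pmf_map vimage_def)
  also have "\<dots> = pmf (bind_pmf M (\<lambda>x. map_pmf (\<lambda>x. x \<in> X) (N x))) True"
    by (simp add: map_bind_pmf)
  also have "\<dots> = measure_pmf.expectation M (\<lambda>x. pmf (map_pmf (\<lambda>x. x \<in> X) (N x)) True)"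
    by (simp add: pmf_bind)
  also have "\<dots> = measure_pmf.expectation M (\<lambda>x. measure_pmf.prob (N x) X)"
    by (simp add: pmf_map vimage_def)
  finally show ?thesis .
qed

lemma expectation_finite_range:
  fixes h :: "'b \<Rightarrow> real"
  assumes "finite J" "\<And>x. x \<in> set_pmf p \<Longrightarrow> Z x \<in> J"
  shows "measure_pmf.expectation p (\<lambda>x. h (Z x)) = (\<Sum>j\<in>J. h j * measure_pmf.prob p {x. Z x = j})"
proof -
  have "measure_pmf.expectation p (\<lambda>x. h (Z x)) = measure_pmf.expectation (map_pmf Z p) h"
    by simp
  also have "\<dots> = (\<Sum>j\<in>J. h j * pmf (map_pmf Z p) j)"
    by (rule integral_measure_pmf_real) (use assms in auto)
  also have "\<dots> = (\<Sum>j\<in>J. h j * measure_pmf.prob p {x. Z x = j})"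
    by (simp add: pmf_map vimage_def)
  finally show ?thesis .
qed

lemma expectation_bool:
  fixes a b :: real
  shows "measure_pmf.expectation p (\<lambda>x. if P x then a else b) =
           a * measure_pmf.prob p {x. P x} + b * (1 - measure_pmf.prob p {x. P x})"
proof -
  have "measure_pmf.expectation p (\<lambda>x. (\<lambda>t. if t then a else b) (P x)) =
          (\<Sum>j\<in>UNIV. (if j then a else b) * measure_pmf.prob p {x. P x = j})"
    by (rule expectation_finite_range) auto
  also have "\<dots> = a * measure_pmf.prob p {x. P x} + b * measure_pmf.prob p {x. \<not> P x}"
    by (simp add: UNIV_bool)
  also have "measure_pmf.prob p {x. \<not> P x} = 1 - measure_pmf.prob p {x. P x}"
  proof -
    have "{x. \<not> P x} = UNIV - {x. P x}" by auto
    then show ?thesis using measure_pmf.prob_compl[of "{x. P x}" p] by simp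
  qed
  finally show ?thesis by simp
qed

lemma prob_Pi_insert:
  assumes "finite A" "x \<notin> A"
  shows "measure_pmf.prob (Pi_pmf (insert x A) dflt p) E =
           measure_pmf.expectation (p x) (\<lambda>y. measure_pmf.prob (Pi_pmf A dflt p) {f. f(x := y) \<in> E})"
proof -
  have "Pi_pmf (insert x A) dflt p = bind_pmf (p x) (\<lambda>y. map_pmf (\<lambda>f. f(x:=y)) (Pi_pmf A dflt p))"
    by (simp add: Pi_pmf_insert'[OF assms] map_pmf_def)
  then show ?thesis by (simp add: prob_bind_pmf vimage_def)
qed

lemma prob_Pi_insert2:
  assumes "finite A" "x \<notin> A"
  shows "measure_pmf.prob (Pi_pmf (insert x A) dflt p) E =
           measure_pmf.expectation (Pi_pmf A dflt p) (\<lambda>f. measure_pmf.prob (p x) {y. f(x := y) \<in> E})"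
proof -
  have "Pi_pmf (insert x A) dflt p = bind_pmf (Pi_pmf A dflt p) (\<lambda>f. map_pmf (\<lambda>y. f(x:=y)) (p x))"
    by (simp add: Pi_pmf_insert'[OF assms] map_pmf_def bind_commute_pmf[of "p x"])
  then show ?thesis by (simp add: prob_bind_pmf vimage_def)
qed


lemma upd_image_insert: "x \<notin> A \<Longrightarrow> f(x := y) ` insert x A = insert y (f ` A)"
  by (auto simp: image_def)


definition unifc :: "nat \<Rightarrow> (nat \<Rightarrow> 'b::{finite,zero}) pmf" where
  "unifc m = Pi_pmf {..<m} 0 (\<lambda>_. pmf_of_set UNIV)"

lemma unifc_alt: "unifc m = pmf_of_set (PiE_dflt {..<m} 0 (\<lambda>_. UNIV))"
  unfolding unifc_def by (rule Pi_pmf_of_set) auto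

lemma unifc_shift:
  "map_pmf (\<lambda>c t. if t < m then c t + h t else 0) (unifc m) = (unifc m :: (nat \<Rightarrow> 'b::{finite,ab_group_add}) pmf)"
proof -
  let ?P = "PiE_dflt {..<m} 0 (\<lambda>_. UNIV) :: (nat \<Rightarrow> 'b) set"
  have "bij_betw (\<lambda>c t. if t < m then c t + h t else 0) ?P ?P"
    by (rule bij_betwI[where g = "\<lambda>c t. if t < m then c t - h t else 0"]) (auto simp: PiE_dflt_def fun_eq_iff)
  moreover have "?P \<noteq> {}" by simp
  moreover have "finite ?P" by (rule finite_PiE_dflt) auto
  ultimately show ?thesis unfolding unifc_alt by (rule map_pmf_of_set_bij_betw)
qed

lemma unifc_Suc: "unifc (Suc m) = Pi_pmf (insert m {..<m}) 0 (\<lambda>_. pmf_of_set UNIV)"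
  unfolding unifc_def by (simp add: lessThan_Suc)


lemma map_not_bernoulli: "0 \<le> e \<Longrightarrow> e \<le> 1 \<Longrightarrow> map_pmf Not (bernoulli_pmf e) = bernoulli_pmf (1 - e)"
proof (rule pmf_eqI)
  fix b :: bool assume e: "0 \<le> e" "e \<le> 1"
  have "pmf (map_pmf Not (bernoulli_pmf e)) b = pmf (bernoulli_pmf e) (\<not> b)"
  proof -
    have "Not -` {b} = {\<not> b}" by auto
    then show ?thesis by (simp add: pmf_map measure_pmf_single)
  qed
  then show "pmf (map_pmf Not (bernoulli_pmf e)) b = pmf (bernoulli_pmf (1 - e)) b"
    using e by (cases b) auto
qed

lemma prob_card_bern:
  assumes S: "finite S" and e: "0 \<le> e" "e \<le> 1"
  shows "measure_pmf.prob (Pi_pmf S d (\<lambda>_. bernoulli_pmf e)) {f. card {x\<in>S. \<not> f x} = k} = Bin k (card S) e"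
proof -
  have "Pi_pmf S (\<not> d) (\<lambda>_. map_pmf Not (bernoulli_pmf e)) = map_pmf (\<lambda>h. Not \<circ> h) (Pi_pmf S d (\<lambda>_. bernoulli_pmf e))"
    by (rule Pi_pmf_map) (use S in auto)
  then have eq: "map_pmf (\<lambda>h. Not \<circ> h) (Pi_pmf S d (\<lambda>_. bernoulli_pmf e)) = Pi_pmf S (\<not> d) (\<lambda>_. bernoulli_pmf (1 - e))"
    using map_not_bernoulli[OF e] by simp
  have "measure_pmf.prob (Pi_pmf S d (\<lambda>_. bernoulli_pmf e)) {f. card {x\<in>S. \<not> f x} = k}
      = measure_pmf.prob (map_pmf (\<lambda>h. Not \<circ> h) (Pi_pmf S d (\<lambda>_. bernoulli_pmf e))) {g. card {x\<in>S. g x} = k}"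
    by (simp add: vimage_def)
  also have "\<dots> = measure_pmf.prob (Pi_pmf S (\<not> d) (\<lambda>_. bernoulli_pmf (1 - e))) {g. card {x\<in>S. g x} = k}"
    unfolding eq ..
  also have "\<dots> = pmf (map_pmf (\<lambda>g. card {x\<in>S. g x}) (Pi_pmf S (\<not> d) (\<lambda>_. bernoulli_pmf (1 - e)))) k"
    by (simp add: pmf_map vimage_def)
  also have "map_pmf (\<lambda>g. card {x\<in>S. g x}) (Pi_pmf S (\<not> d) (\<lambda>_. bernoulli_pmf (1 - e))) = binomial_pmf (card S) (1 - e)"
    by (rule binomial_pmf_altdef'[symmetric]) (use S e in auto)
  also have "pmf (binomial_pmf (card S) (1 - e)) k = Bin k (card S) e"
    using e by (simp add: Bin_def)
  finally show ?thesis .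
qed

lemma prob_card_bern2:
  assumes U: "finite U" and BU: "B \<subseteq> U" and e: "0 \<le> e" "e \<le> 1" and r: "r \<le> mD"
  shows "measure_pmf.prob (Pi_pmf U d (\<lambda>_. bernoulli_pmf e))
           {f. card {x\<in>U. \<not> f x} = mD \<and> card ({x\<in>U. \<not> f x} \<inter> B) = r}
         = Bin r (card B) e * Bin (mD - r) (card U - card B) e"
proof -
  let ?M = "Pi_pmf B d (\<lambda>_. bernoulli_pmf e)"
  let ?N = "Pi_pmf (U - B) d (\<lambda>_. bernoulli_pmf e)"
  define mg where "mg = (\<lambda>(f :: 'a \<Rightarrow> bool, g :: 'a \<Rightarrow> bool) x. if x \<in> B then f x else g x)"
  have fB: "finite B" "finite (U - B)" using U BU finite_subset by auto
  have UB: "U = B \<union> (U - B)" using BU by auto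
  have PU: "Pi_pmf U d (\<lambda>_. bernoulli_pmf e) = map_pmf mg (pair_pmf ?M ?N)"
    unfolding mg_def by (subst UB, rule Pi_pmf_union) (use fB in auto)
  have key: "(card {x\<in>U. \<not> mg (f, g) x} = mD \<and> card ({x\<in>U. \<not> mg (f, g) x} \<inter> B) = r)
      \<longleftrightarrow> card {x\<in>B. \<not> f x} = r \<and> card {x\<in>U - B. \<not> g x} = mD - r" for f g
  proof -
    have s1: "{x\<in>U. \<not> mg (f, g) x} \<inter> B = {x\<in>B. \<not> f x}" using BU by (auto simp: mg_def)
    have s2: "{x\<in>U. \<not> mg (f, g) x} = {x\<in>B. \<not> f x} \<union> {x\<in>U - B. \<not> g x}" using BU by (auto simp: mg_def)
    have c2: "card {x\<in>U. \<not> mg (f, g) x} = card {x\<in>B. \<not> f x} + card {x\<in>U - B. \<not> g x}"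
      unfolding s2 by (rule card_Un_disjoint) (use fB in auto)
    show ?thesis unfolding s1 c2 using r by auto
  qed
  have pre: "mg -` {f. card {x\<in>U. \<not> f x} = mD \<and> card ({x\<in>U. \<not> f x} \<inter> B) = r}
      = {(f, g). card {x\<in>B. \<not> f x} = r \<and> card {x\<in>U - B. \<not> g x} = mD - r}"
  proof (rule Set.set_eqI)
    fix x :: "('a \<Rightarrow> bool) \<times> ('a \<Rightarrow> bool)"
    obtain f g where x: "x = (f, g)" by (cases x)
    show "x \<in> mg -` {f. card {x\<in>U. \<not> f x} = mD \<and> card ({x\<in>U. \<not> f x} \<inter> B) = r}
      \<longleftrightarrow> x \<in> {(f, g). card {x\<in>B. \<not> f x} = r \<and> card {x\<in>U - B. \<not> g x} = mD - r}"
      unfolding x vimage_eq mem_Collect_eq prod.case by (rule key)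
  qed
  have "measure_pmf.prob (Pi_pmf U d (\<lambda>_. bernoulli_pmf e))
           {f. card {x\<in>U. \<not> f x} = mD \<and> card ({x\<in>U. \<not> f x} \<inter> B) = r}
      = measure_pmf.prob (pair_pmf ?M ?N) {(f, g). card {x\<in>B. \<not> f x} = r \<and> card {x\<in>U - B. \<not> g x} = mD - r}"
    unfolding PU measure_map_pmf pre ..
  also have "pair_pmf ?M ?N = bind_pmf ?M (\<lambda>f. map_pmf (Pair f) ?N)"
    by (simp add: pair_pmf_def map_pmf_def)
  also have "measure_pmf.prob (bind_pmf ?M (\<lambda>f. map_pmf (Pair f) ?N)) {(f, g). card {x\<in>B. \<not> f x} = r \<and> card {x\<in>U - B. \<not> g x} = mD - r}
      = measure_pmf.expectation ?M (\<lambda>f. if card {x\<in>B. \<not> f x} = r then measure_pmf.prob ?N {g. card {x\<in>U - B. \<not> g x} = mD - r} else 0)"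
    unfolding prob_bind_pmf by (rule arg_cong[where f = "measure_pmf.expectation ?M"]) (auto simp: vimage_def)
  also have "\<dots> = measure_pmf.prob ?N {g. card {x\<in>U - B. \<not> g x} = mD - r} * measure_pmf.prob ?M {f. card {x\<in>B. \<not> f x} = r}"
    unfolding expectation_bool by simp
  also have "\<dots> = Bin r (card B) e * Bin (mD - r) (card U - card B) e"
    using prob_card_bern[OF fB(1) e] prob_card_bern[OF fB(2) e] card_Diff_subset[OF fB(1) BU] by simp
  finally show ?thesis .
qed




lemma card_carrier_vec': "card (carrier_vec n:: 'b::finite vec set) = CARD('b) ^ n"
proof -
  have "bij_betw list_of_vec (carrier_vec n:: 'b vec set) {xs. set xs \<subseteq> UNIV \<and> length xs = n}"
    unfolding bij_betw_def inj_on_def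
    apply (auto simp: image_def)
     apply (metis vec_list)
    by (metis carrier_vec_def list_vec mem_Collect_eq dim_vec_of_list)
  then have "card (carrier_vec n:: 'b vec set) = card {xs. set xs \<subseteq> (UNIV::'b set) \<and> length xs = n}"
    using bij_betw_same_card by blast
  also have "\<dots> = CARD('b) ^ n" by (rule card_lists_length_eq, simp)
  finally show ?thesis .
qed

lemma finite_carrier_vec'[simp]: "finite (carrier_vec n:: 'b::finite vec set)"
  by (rule card_ge_0_finite, unfold card_carrier_vec', auto)

locale fvs = vec_space f_ty n for f_ty :: "'a::{finite,field} itself" and n
begin

definition lc :: "(nat \<Rightarrow> 'a) \<Rightarrow> 'a vec list \<Rightarrow> 'a vec" where
  "lc c L = vec n (\<lambda>j. \<Sum>t<length L. c t * L!t $ j)"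

lemma lc_carrier[simp]: "lc c L \<in> carrier_vec n" by (simp add: lc_def)
lemma lc_dim[simp]: "dim_vec (lc c L) = n" by (simp add: lc_def)
lemma lc_index[simp]: "j < n \<Longrightarrow> lc c L $ j = (\<Sum>t<length L. c t * L!t $ j)" by (simp add: lc_def)

lemma lc_eq_lincomb_list: assumes "set L \<subseteq> carrier_vec n" shows "lc c L = lincomb_list c L"
proof -
  have "\<forall>w\<in>set L. dim_vec w = n" using assms by auto
  note * = lincomb_list_as_mat_mult[OF this, of c]
  show ?thesis unfolding *
    apply (rule eq_vecI)
    using assms
    by (auto simp: mult_mat_vec_def scalar_prod_def lc_def mat_of_cols_def row_def intro!: sum.cong
          simp flip: lessThan_atLeast0)
qed

lemma span_lc: assumes "set L \<subseteq> carrier_vec n" shows "span (set L) = range (\<lambda>c. lc c L)"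
  unfolding span_list_as_span[OF assms, symmetric] span_list_def lc_eq_lincomb_list[OF assms]
  by auto

lemma lc_Cons: assumes "v \<in> carrier_vec n" shows "lc c (v # L) = c 0 \<cdot>\<^sub>v v + lc (c \<circ> Suc) L"
  by (rule eq_vecI) (use assms in \<open>auto simp: sum.lessThan_Suc_shift simp del: sum.lessThan_Suc\<close>)

lemma lc_snoc: assumes "v \<in> carrier_vec n" shows "lc c (L @ [v]) = lc c L + c (length L) \<cdot>\<^sub>v v"
proof (rule eq_vecI)
  fix j assume j: "j < dim_vec (lc c L + c (length L) \<cdot>\<^sub>v v)"
  have "(\<Sum>t<length (L @ [v]). c t * (L @ [v]) ! t $ j) = (\<Sum>t<length L. c t * (L @ [v]) ! t $ j) + c (length L) * v $ j"
    by simp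
  also have "(\<Sum>t<length L. c t * (L @ [v]) ! t $ j) = (\<Sum>t<length L. c t * L ! t $ j)"
    by (rule sum.cong) (auto simp: nth_append)
  finally show "lc c (L @ [v]) $ j = (lc c L + c (length L) \<cdot>\<^sub>v v) $ j" using j assms by simp
qed (use assms in simp)

lemma fin_list: assumes "finite S" "S \<subseteq> carrier_vec n"
  obtains L where "set L = S" "span S = range (\<lambda>c. lc c L)"
proof -
  obtain L where "set L = S" using finite_list assms(1) by blast
  then show thesis using that span_lc[of L] assms(2) by blast
qed

lemma span_carrier: "S \<subseteq> carrier_vec n \<Longrightarrow> span S \<subseteq> carrier_vec n"
  by (rule subsetI, erule span_closed[rotated])

lemma finite_span[simp]: "S \<subseteq> carrier_vec n \<Longrightarrow> finite (span S)"
  by (rule finite_subset[OF span_carrier]) auto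

lemma span_insert_iff:
  assumes S: "finite S" "S \<subseteq> carrier_vec n" and v: "v \<in> carrier_vec n"
  shows "w \<in> span (insert v S) \<longleftrightarrow> w \<in> carrier_vec n \<and> (\<exists>a. w - a \<cdot>\<^sub>v v \<in> span S)"
proof -
  obtain L where L: "set L = S" "span S = range (\<lambda>c. lc c L)" by (rule fin_list[OF S])
  have sv: "set (v # L) \<subseteq> carrier_vec n" using L(1) S(2) v by simp
  have span2: "span (insert v S) = range (\<lambda>c. lc c (v # L))"
    using span_lc[OF sv] L(1) by simp
  show ?thesis
  proof
    assume "w \<in> span (insert v S)"
    then obtain c where w: "w = lc c (v # L)" using span2 by auto
    have "w - c 0 \<cdot>\<^sub>v v = lc (c \<circ> Suc) L"
      unfolding w lc_Cons[OF v] by (rule eq_vecI) (use v in simp_all)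
    then have "w - c 0 \<cdot>\<^sub>v v \<in> span S" unfolding L(2) by simp
    then show "w \<in> carrier_vec n \<and> (\<exists>a. w - a \<cdot>\<^sub>v v \<in> span S)" using w by auto
  next
    assume "w \<in> carrier_vec n \<and> (\<exists>a. w - a \<cdot>\<^sub>v v \<in> span S)"
    then obtain a c where wc: "w \<in> carrier_vec n" "w - a \<cdot>\<^sub>v v = lc c L" unfolding L(2) by auto
    have "w = lc (case_nat a c) (v # L)"
      unfolding lc_Cons[OF v]
    proof (rule eq_vecI)
      fix j assume j: "j < dim_vec (case_nat a c 0 \<cdot>\<^sub>v v + lc (case_nat a c \<circ> Suc) L)"
      have "(w - a \<cdot>\<^sub>v v) $ j = lc c L $ j" by (simp only: wc(2))
      then have e: "w $ j - a * v $ j = (\<Sum>t<length L. c t * L ! t $ j)" using j wc(1) v by simp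
      then show "w $ j = (case_nat a c 0 \<cdot>\<^sub>v v + lc (case_nat a c \<circ> Suc) L) $ j"
        using j wc v by (simp add: o_def algebra_simps)
    qed (use wc in simp)
    then show "w \<in> span (insert v S)" unfolding span2 by simp
  qed
qed

lemma span_insert_in:
  assumes S: "finite S" "S \<subseteq> carrier_vec n" and v: "v \<in> span S"
  shows "span (insert v S) = span S"
proof
  obtain L where L: "set L = S" "span S = range (\<lambda>c. lc c L)" by (rule fin_list[OF S])
  have vc: "v \<in> carrier_vec n" using v span_carrier[OF S(2)] by blast
  obtain d where d: "v = lc d L" using v unfolding L(2) by auto
  show "span (insert v S) \<subseteq> span S"
  proof
    fix w assume "w \<in> span (insert v S)"
    then obtain a c where wc: "w \<in> carrier_vec n" "w - a \<cdot>\<^sub>v v = lc c L"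
      using span_insert_iff[OF S vc] unfolding L(2) by auto
    have "w = lc (\<lambda>t. c t + a * d t) L"
    proof (rule eq_vecI)
      fix j assume j: "j < dim_vec (lc (\<lambda>t. c t + a * d t) L)"
      have "(w - a \<cdot>\<^sub>v v) $ j = lc c L $ j" by (simp only: wc(2))
      then have e: "w $ j - a * v $ j = (\<Sum>t<length L. c t * L ! t $ j)" using j wc(1) vc by simp
      have "v $ j = (\<Sum>t<length L. d t * L ! t $ j)" using j unfolding d by simp
      then show "w $ j = lc (\<lambda>t. c t + a * d t) L $ j"
        using j e by (simp add: algebra_simps sum.distrib sum_distrib_left)
    qed (use wc in simp)
    then show "w \<in> span S" unfolding L(2) by simp
  qed
  show "span S \<subseteq> span (insert v S)" by (rule span_is_monotone) auto
qed

lemma card_span_insert: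
  assumes S: "finite S" "S \<subseteq> carrier_vec n" and v: "v \<in> carrier_vec n" "v \<notin> span S"
  shows "card (span (insert v S)) = CARD('a) * card (span S)"
proof -
  obtain L where L: "set L = S" "span S = range (\<lambda>c. lc c L)" by (rule fin_list[OF S])
  have "bij_betw (\<lambda>(a, s). a \<cdot>\<^sub>v v + s) ((UNIV::'a set) \<times> span S) (span (insert v S))"
  proof (rule bij_betwI')
    fix x y assume x: "x \<in> (UNIV::'a set) \<times> span S" and y: "y \<in> (UNIV::'a set) \<times> span S"
    obtain a s where xa: "x = (a, s)" "s \<in> span S" using x by auto
    obtain b t where yb: "y = (b, t)" "t \<in> span S" using y by auto
    obtain c where c: "s = lc c L" using xa(2) unfolding L(2) by auto
    obtain d where d: "t = lc d L" using yb(2) unfolding L(2) by auto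
    show "((\<lambda>(a, s). a \<cdot>\<^sub>v v + s) x = (\<lambda>(a, s). a \<cdot>\<^sub>v v + s) y) = (x = y)"
    proof
      assume eq: "(\<lambda>(a, s). a \<cdot>\<^sub>v v + s) x = (\<lambda>(a, s). a \<cdot>\<^sub>v v + s) y"
      then have eq': "a \<cdot>\<^sub>v v + s = b \<cdot>\<^sub>v v + t" using xa yb by simp
      have ab: "a = b"
      proof (rule ccontr)
        assume ab: "a \<noteq> b"
        have "v = lc (\<lambda>i. (d i - c i) / (a - b)) L"
        proof (rule eq_vecI)
          fix j assume j: "j < dim_vec (lc (\<lambda>i. (d i - c i) / (a - b)) L)"
          have "(a \<cdot>\<^sub>v v + s) $ j = (b \<cdot>\<^sub>v v + t) $ j" using eq' by simp
          then have "a * v $ j + s $ j = b * v $ j + t $ j" using j v by (simp add: c d)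
          then have "v $ j = (t $ j - s $ j) / (a - b)" using ab
            by (simp add: field_simps)
          then show "v $ j = lc (\<lambda>i. (d i - c i) / (a - b)) L $ j"
            using j by (simp add: c d sum_divide_distrib[symmetric] sum_subtractf[symmetric] algebra_simps)
        qed (use v in simp)
        then have "v \<in> span S" unfolding L(2) by simp
        then show False using v by simp
      qed
      have "s = t"
      proof (rule eq_vecI)
        fix j assume j: "j < dim_vec t"
        have "(a \<cdot>\<^sub>v v + s) $ j = (b \<cdot>\<^sub>v v + t) $ j" using eq' by simp
        then show "s $ j = t $ j" using j v ab by (simp add: c d)
      qed (simp add: c d)
      then show "x = y" using ab xa yb by simp
    qed simp
  next
    fix x assume x: "x \<in> (UNIV::'a set) \<times> span S"
    then obtain a s where xa: "x = (a, s)" "s \<in> span S" by auto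
    have sc: "s \<in> carrier_vec n" using xa(2) span_carrier[OF S(2)] by blast
    have "a \<cdot>\<^sub>v v + s - a \<cdot>\<^sub>v v = s" by (rule eq_vecI) (use sc v in simp_all)
    then show "(\<lambda>(a, s). a \<cdot>\<^sub>v v + s) x \<in> span (insert v S)"
      unfolding span_insert_iff[OF S v(1)] using xa sc v by (metis add_carrier_vec smult_carrier_vec case_prod_conv)
  next
    fix w assume "w \<in> span (insert v S)"
    then obtain a where wa: "w \<in> carrier_vec n" "w - a \<cdot>\<^sub>v v \<in> span S"
      unfolding span_insert_iff[OF S v(1)] by auto
    have "w = a \<cdot>\<^sub>v v + (w - a \<cdot>\<^sub>v v)" by (rule eq_vecI) (use wa v in simp_all)
    then show "\<exists>x\<in>(UNIV::'a set) \<times> span S. w = (\<lambda>(a, s). a \<cdot>\<^sub>v v + s) x" using wa(2) by auto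
  qed
  then have "card (span (insert v S)) = card ((UNIV::'a set) \<times> span S)"
    by (simp add: bij_betw_same_card)
  also have "\<dots> = CARD('a) * card (span S)" by (simp add: card_cartesian_product)
  finally show ?thesis .
qed


lemma card_ge2: "CARD('a) \<ge> 2"
proof -
  have "card {0::'a, 1} \<le> CARD('a)" by (rule card_mono) auto
  then show ?thesis by simp
qed

lemma card_span_pow: "finite S \<Longrightarrow> S \<subseteq> carrier_vec n \<Longrightarrow> \<exists>d. card (span S) = CARD('a) ^ d"
proof (induction S rule: finite_induct)
  case empty
  then show ?case by (intro exI[of _ 0]) (simp add: span_empty)
next
  case (insert v S)
  then obtain d where d: "card (span S) = CARD('a) ^ d" by auto
  show ?case
  proof (cases "v \<in> span S")
    case True
    then show ?thesis using span_insert_in[of S v] insert d by auto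
  next
    case False
    then show ?thesis using card_span_insert[of S v] insert d
      by (intro exI[of _ "Suc d"]) auto
  qed
qed

definition cd :: "'a vec set \<Rightarrow> nat" where
  "cd S = (THE d. card (span S) = CARD('a) ^ d)"

lemma cd: assumes "finite S" "S \<subseteq> carrier_vec n" shows "card (span S) = CARD('a) ^ cd S"
proof -
  obtain d where d: "card (span S) = CARD('a) ^ d" using card_span_pow[OF assms] by blast
  have "cd S = d" unfolding cd_def
    by (rule the_equality) (use d card_ge2 in \<open>auto simp: power_inject_exp\<close>)
  then show ?thesis using d by simp
qed

lemma cd_unique: assumes "finite S" "S \<subseteq> carrier_vec n" "card (span S) = CARD('a) ^ d" shows "cd S = d"
  using cd[OF assms(1,2)] assms(3) card_ge2 by (simp add: power_inject_exp)

lemma cd_le: assumes "finite S" "S \<subseteq> carrier_vec n" shows "cd S \<le> n"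
proof -
  have "card (span S) \<le> card (carrier_vec n :: 'a vec set)"
    by (rule card_mono) (auto simp: span_carrier[OF assms(2)])
  then have "CARD('a) ^ cd S \<le> CARD('a) ^ n" using cd[OF assms] by (simp add: card_carrier_vec')
  then show ?thesis using card_ge2 by (simp add: power_le_imp_le_exp)
qed

lemma cd_full: assumes "finite S" "S \<subseteq> carrier_vec n" shows "span S = carrier_vec n \<longleftrightarrow> cd S = n"
proof
  assume "span S = carrier_vec n"
  then show "cd S = n" using cd_unique[OF assms] by (simp add: card_carrier_vec')
next
  assume "cd S = n"
  then have "card (span S) = card (carrier_vec n :: 'a vec set)" using cd[OF assms] by (simp add: card_carrier_vec')
  then show "span S = carrier_vec n"
    using card_subset_eq[OF finite_carrier_vec' span_carrier[OF assms(2)]] by simp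
qed

lemma cd_empty: "cd {} = 0"
  by (rule cd_unique) (auto simp: span_empty)

lemma cd_insert_in: assumes "finite S" "S \<subseteq> carrier_vec n" "v \<in> span S" shows "cd (insert v S) = cd S"
  using span_insert_in[OF assms] unfolding cd_def by simp

lemma cd_insert_notin: assumes "finite S" "S \<subseteq> carrier_vec n" "v \<in> carrier_vec n" "v \<notin> span S"
  shows "cd (insert v S) = Suc (cd S)"
  by (rule cd_unique) (use assms card_span_insert[OF assms] cd[OF assms(1,2)] in auto)

lemma dim_full_iff: assumes "set ws \<subseteq> carrier_vec n"
  shows "vectorspace.dim class_ring (span_vs (set ws)) = n \<longleftrightarrow> span (set ws) = carrier_vec n"
proof
  assume sp: "span (set ws) = carrier_vec n"
  have "span_vs (set ws) = V" unfolding sp by (simp add: module_vec_def)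
  then show "vectorspace.dim class_ring (span_vs (set ws)) = n" using dim_is_n by simp
next
  assume dm: "vectorspace.dim class_ring (span_vs (set ws)) = n"
  have P0: "{} \<subseteq> set ws \<and> lin_indpt {}"
    by (metis (no_types) empty_subsetI fin_dim finite_basis_exists subset_li_is_li vec_vs vectorspace.basis_def)
  obtain U where U: "finite U" "maximal U (\<lambda>T. T \<subseteq> set ws \<and> lin_indpt T)"
    using maximal_exists_superset[of "set ws" "\<lambda>T. T \<subseteq> set ws \<and> lin_indpt T" "{}"] P0 by auto
  have cU: "card U = n" using dim_span[OF assms _ U(2)] dm by simp
  have Uw: "U \<subseteq> set ws" "lin_indpt U" using U(2) unfolding maximal_def by auto
  have "basis U"
    by (rule dim_li_is_basis) (use U(1) Uw assms cU dim_is_n in auto)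
  then have "span U = carrier_vec n" unfolding basis_def by simp
  moreover have "span U \<subseteq> span (set ws)" by (rule span_is_monotone[OF Uw(1)])
  ultimately show "span (set ws) = carrier_vec n" using span_carrier[OF assms] by blast
qed


lemma LemF:
  fixes p :: "'a vec pmf" and D :: "'a vec set"
  assumes p_set: "set_pmf p \<subseteq> carrier_vec n"
    and p_span: "\<And>S. finite S \<Longrightarrow> S \<subseteq> carrier_vec n \<Longrightarrow> D \<subseteq> S \<Longrightarrow>
                   measure_pmf.prob p (span S) = card (span S) / CARD('a) ^ n"
    and R: "finite R"
  shows "finite S \<Longrightarrow> S \<subseteq> carrier_vec n \<Longrightarrow> D \<subseteq> S \<Longrightarrow>
    measure_pmf.prob (Pi_pmf R dflt (\<lambda>_. p)) {f. span (S \<union> f ` R) = carrier_vec n}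
      = Pfull CARD('a) (card R) (n - cd S)"
  using R
proof (induction R arbitrary: S rule: finite_induct)
  case empty
  have "measure_pmf.prob (Pi_pmf {} dflt (\<lambda>_. p)) {f. span (S \<union> f ` {}) = carrier_vec n}
        = (if span S = carrier_vec n then 1 else 0)" by simp
  also have "\<dots> = Pfull CARD('a) (card {}) (n - cd S)"
    using cd_full[OF empty.prems(1,2)] cd_le[OF empty.prems(1,2)] Pfull_a0[of "n - cd S" "CARD('a)"]
    by auto
  finally show ?case .
next
  case (insert x R)
  let ?q = "CARD('a)"
  have q0: "?q > 0" by simp
  have "measure_pmf.prob (Pi_pmf (insert x R) dflt (\<lambda>_. p)) {f. span (S \<union> f ` insert x R) = carrier_vec n}
     = measure_pmf.expectation p (\<lambda>y. measure_pmf.prob (Pi_pmf R dflt (\<lambda>_. p))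
          {f. f(x := y) \<in> {f. span (S \<union> f ` insert x R) = carrier_vec n}})"
    by (rule prob_Pi_insert[OF insert.hyps])
  also have "\<dots> = measure_pmf.expectation p (\<lambda>y. Pfull ?q (card R) (n - cd (insert y S)))"
  proof (rule integral_cong_AE)
    show "AE y in measure_pmf p. measure_pmf.prob (Pi_pmf R dflt (\<lambda>_. p))
          {f. f(x := y) \<in> {f. span (S \<union> f ` insert x R) = carrier_vec n}}
        = Pfull ?q (card R) (n - cd (insert y S))"
    proof (rule AE_pmfI)
      fix y assume y: "y \<in> set_pmf p"
      have eqs: "{f. f(x := y) \<in> {f. span (S \<union> f ` insert x R) = carrier_vec n}}
            = {f. span (insert y S \<union> f ` R) = carrier_vec n}"
        by (simp only: mem_Collect_eq upd_image_insert[OF insert.hyps(2)] Un_insert_left Un_insert_right)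
      show "measure_pmf.prob (Pi_pmf R dflt (\<lambda>_. p))
          {f. f(x := y) \<in> {f. span (S \<union> f ` insert x R) = carrier_vec n}}
        = Pfull ?q (card R) (n - cd (insert y S))"
        unfolding eqs by (rule insert.IH) (use insert.prems y p_set in auto)
    qed
  qed auto
  also have "\<dots> = measure_pmf.expectation p (\<lambda>y. if y \<in> span S then Pfull ?q (card R) (n - cd S)
                     else Pfull ?q (card R) (n - Suc (cd S)))"
  proof (rule integral_cong_AE)
    show "AE y in measure_pmf p. Pfull ?q (card R) (n - cd (insert y S)) =
       (if y \<in> span S then Pfull ?q (card R) (n - cd S) else Pfull ?q (card R) (n - Suc (cd S)))"
    proof (rule AE_pmfI)
      fix y assume y: "y \<in> set_pmf p"
      then have yc: "y \<in> carrier_vec n" using p_set by auto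
      show "Pfull ?q (card R) (n - cd (insert y S)) =
       (if y \<in> span S then Pfull ?q (card R) (n - cd S) else Pfull ?q (card R) (n - Suc (cd S)))"
        using cd_insert_in[OF insert.prems(1,2)] cd_insert_notin[OF insert.prems(1,2) yc] by auto
    qed
  qed auto
  also have "\<dots> = (card (span S) / ?q ^ n) * Pfull ?q (card R) (n - cd S)
                   + (1 - card (span S) / ?q ^ n) * Pfull ?q (card R) (n - Suc (cd S))"
    unfolding expectation_bool Collect_mem_eq p_span[OF insert.prems] by (simp add: mult.commute)
  also have "\<dots> = Pfull ?q (card (insert x R)) (n - cd S)"
  proof (cases "cd S = n")
    case True
    then show ?thesis using cd[OF insert.prems(1,2)] insert.hyps by simp
  next
    case False
    then have c1: "n - cd S \<ge> 1" using cd_le[OF insert.prems(1,2)] by simp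
    have e: "card (span S) / ?q ^ n = 1 / real ?q ^ (n - cd S)"
      using cd[OF insert.prems(1,2)] cd_le[OF insert.prems(1,2)]
      by (simp add: power_diff)
    have e2: "n - Suc (cd S) = n - cd S - 1" by simp
    show ?thesis unfolding e e2 using Pfull_rec'[OF q0 c1, of "card R"] insert.hyps by simp
  qed
  finally show ?case .
qed

lemma cv_ne: "carrier_vec n \<noteq> ({} :: 'a vec set)"
  using zero_carrier_vec[of n] by blast

lemma prob_unif_span:
  assumes "S \<subseteq> carrier_vec n"
  shows "measure_pmf.prob (pmf_of_set (carrier_vec n)) (span S) = card (span S) / CARD('a) ^ n"
proof -
  have "carrier_vec n \<inter> span S = span S" using span_carrier[OF assms] by blast
  then show ?thesis
    by (simp add: measure_pmf_of_set card_carrier_vec' cv_ne)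
qed

lemma LemR:
  assumes A: "finite A"
  shows "r \<le> n \<Longrightarrow> measure_pmf.prob (Pi_pmf A dflt (\<lambda>_. pmf_of_set (carrier_vec n))) {f. cd (f ` A) = r}
      = Prank CARD('a) r (card A) n"
  using A
proof (induction A arbitrary: r rule: finite_induct)
  case empty
  then show ?case using Prank_base[of "CARD('a)" r n] card_ge2 by (simp add: cd_empty)
next
  case (insert x A)
  let ?q = "CARD('a)"
  let ?U = "pmf_of_set (carrier_vec n) :: 'a vec pmf"
  let ?M = "Pi_pmf A dflt (\<lambda>_. ?U)"
  have U: "set_pmf ?U = carrier_vec n" by (simp add: cv_ne)
  have fA: "\<And>f. f \<in> set_pmf ?M \<Longrightarrow> f ` A \<subseteq> carrier_vec n"
    using set_Pi_pmf_subset'[OF insert.hyps(1), of dflt "\<lambda>_. ?U"] U by (auto simp: PiE_dflt_def)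
  define g where "g j = (if j = r then real ?q ^ r / real ?q ^ n else 0)
                      + (if Suc j = r then 1 - real ?q ^ j / real ?q ^ n else 0)" for j
  have "measure_pmf.prob (Pi_pmf (insert x A) dflt (\<lambda>_. ?U)) {f. cd (f ` insert x A) = r}
     = measure_pmf.expectation ?M (\<lambda>f. measure_pmf.prob ?U {y. f(x := y) \<in> {f. cd (f ` insert x A) = r}})"
    by (rule prob_Pi_insert2[OF insert.hyps])
  also have "\<dots> = measure_pmf.expectation ?M (\<lambda>f. g (cd (f ` A)))"
  proof (rule integral_cong_AE)
    show "AE f in measure_pmf ?M. measure_pmf.prob ?U {y. f(x := y) \<in> {f. cd (f ` insert x A) = r}} = g (cd (f ` A))"
    proof (rule AE_pmfI)
      fix f assume f: "f \<in> set_pmf ?M"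
      let ?T = "f ` A"
      have T: "finite ?T" "?T \<subseteq> carrier_vec n" using insert.hyps(1) fA[OF f] by auto
      have "{y. f(x := y) \<in> {f. cd (f ` insert x A) = r}} = {y. cd (insert y ?T) = r}"
        by (simp only: mem_Collect_eq upd_image_insert[OF insert.hyps(2)] Un_insert_left Un_insert_right)
      then have "measure_pmf.prob ?U {y. f(x := y) \<in> {f. cd (f ` insert x A) = r}}
          = measure_pmf.prob ?U {y. cd (insert y ?T) = r}" by simp
      also have "\<dots> = measure_pmf.expectation ?U (\<lambda>y. if y \<in> span ?T then (if cd ?T = r then 1 else 0)
                          else (if Suc (cd ?T) = r then 1 else 0))"
      proof -
        have "measure_pmf.prob ?U {y. cd (insert y ?T) = r} = measure_pmf.expectation ?U (indicator {y. cd (insert y ?T) = r})"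
          by simp
        also have "\<dots> = measure_pmf.expectation ?U (\<lambda>y. if y \<in> span ?T then (if cd ?T = r then 1 else 0)
                          else (if Suc (cd ?T) = r then 1 else 0))"
        proof (rule integral_cong_AE)
          show "AE y in measure_pmf ?U. indicat_real {y. cd (insert y ?T) = r} y = (if y \<in> span ?T then (if cd ?T = r then 1 else 0)
                          else (if Suc (cd ?T) = r then 1 else 0))"
          proof (rule AE_pmfI)
            fix y assume "y \<in> set_pmf ?U"
            then have yc: "y \<in> carrier_vec n" using U by simp
            show "indicat_real {y. cd (insert y ?T) = r} y = (if y \<in> span ?T then (if cd ?T = r then 1 else 0)
                          else (if Suc (cd ?T) = r then 1 else 0))"
              using cd_insert_in[OF T] cd_insert_notin[OF T yc] by (auto simp: indicator_def)
          qed
        qed auto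
        finally show ?thesis .
      qed
      also have "\<dots> = g (cd ?T)"
        unfolding expectation_bool Collect_mem_eq prob_unif_span[OF T(2)] cd[OF T] g_def by auto
      finally show "measure_pmf.prob ?U {y. f(x := y) \<in> {f. cd (f ` insert x A) = r}} = g (cd (f ` A))" .
    qed
  qed auto
  also have "\<dots> = (\<Sum>j\<in>{..n}. g j * measure_pmf.prob ?M {f. cd (f ` A) = j})"
  proof (rule expectation_finite_range)
    fix f assume "f \<in> set_pmf ?M"
    then show "cd (f ` A) \<in> {..n}" using fA cd_le insert.hyps(1) by auto
  qed simp
  also have "\<dots> = (\<Sum>j\<in>{..n}. g j * Prank ?q j (card A) n)"
    using insert.IH by simp
  also have "\<dots> = Prank ?q r (card (insert x A)) n"
  proof (cases r)
    case 0
    have "(\<Sum>j\<in>{..n}. g j * Prank ?q j (card A) n) = (\<Sum>j\<in>{..n}. (if j = 0 then 1 / real ?q ^ n * Prank ?q j (card A) n else 0))"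
      by (rule sum.cong) (auto simp: g_def 0)
    also have "\<dots> = 1 / real ?q ^ n * Prank ?q 0 (card A) n" by simp
    also have "\<dots> = Prank ?q r (card (insert x A)) n"
      using Prank_rec0[of ?q "card A" n] card_ge2 insert.hyps 0 by simp
    finally show ?thesis .
  next
    case (Suc r')
    have "(\<Sum>j\<in>{..n}. g j * Prank ?q j (card A) n) = (\<Sum>j\<in>{..n}. (if j = r then real ?q ^ r / real ?q ^ n * Prank ?q j (card A) n else 0)
           + (if j = r' then (1 - real ?q ^ r' / real ?q ^ n) * Prank ?q j (card A) n else 0))"
      by (rule sum.cong) (auto simp: g_def Suc)
    also have "\<dots> = real ?q ^ r / real ?q ^ n * Prank ?q r (card A) n + (1 - real ?q ^ r' / real ?q ^ n) * Prank ?q r' (card A) n"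
      using insert.prems Suc by (simp add: sum.distrib)
    also have "\<dots> = Prank ?q r (card (insert x A)) n"
      using Prank_rec[of ?q r' n "card A"] card_ge2 insert.hyps insert.prems Suc by simp
    finally show ?thesis .
  qed
  finally show ?case .
qed


lemma lc_append: "lc c (L1 @ L2) = lc c L1 + lc (\<lambda>t. c (t + length L1)) L2"
proof (rule eq_vecI)
  fix j assume j: "j < dim_vec (lc c L1 + lc (\<lambda>t. c (t + length L1)) L2)"
  have "(\<Sum>t<length (L1 @ L2). c t * (L1 @ L2) ! t $ j)
      = (\<Sum>t\<in>{0..<length L1}. c t * (L1 @ L2) ! t $ j) + (\<Sum>t\<in>{length L1..<length L1 + length L2}. c t * (L1 @ L2) ! t $ j)"
    by (simp add: lessThan_atLeast0 atLeastLessThan_add_Un[of 0] sum.union_disjoint)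
  also have "(\<Sum>t\<in>{0..<length L1}. c t * (L1 @ L2) ! t $ j) = (\<Sum>t<length L1. c t * L1 ! t $ j)"
    by (simp add: lessThan_atLeast0 nth_append)
  also have "(\<Sum>t\<in>{length L1..<length L1 + length L2}. c t * (L1 @ L2) ! t $ j)
      = (\<Sum>t\<in>{0 + length L1..<length L2 + length L1}. c t * (L1 @ L2) ! t $ j)" by (simp add: add.commute)
  also have "\<dots> = (\<Sum>t<length L2. c (t + length L1) * L2 ! t $ j)"
    unfolding sum.shift_bounds_nat_ivl by (simp add: lessThan_atLeast0 nth_append)
  finally show "lc c (L1 @ L2) $ j = (lc c L1 + lc (\<lambda>t. c (t + length L1)) L2) $ j"
    using j by simp
qed simp

lemma span_union_list:
  assumes S: "finite S" "S \<subseteq> carrier_vec n" and L: "set L \<subseteq> carrier_vec n"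
  shows "w \<in> span (S \<union> set L) \<longleftrightarrow> (\<exists>s h. s \<in> span S \<and> w = s + lc h L)"
proof -
  obtain LS where LS: "set LS = S" "span S = range (\<lambda>c. lc c LS)" by (rule fin_list[OF S])
  have sp: "span (S \<union> set L) = range (\<lambda>c. lc c (LS @ L))"
    using span_lc[of "LS @ L"] LS(1) S(2) L by simp
  show ?thesis
  proof
    assume "w \<in> span (S \<union> set L)"
    then obtain c where "w = lc c (LS @ L)" unfolding sp by auto
    then have "w = lc c LS + lc (\<lambda>t. c (t + length LS)) L" by (simp add: lc_append)
    then show "\<exists>s h. s \<in> span S \<and> w = s + lc h L" unfolding LS(2) by blast
  next
    assume "\<exists>s h. s \<in> span S \<and> w = s + lc h L"
    then obtain c h where w: "w = lc c LS + lc h L" unfolding LS(2) by auto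
    define d where "d t = (if t < length LS then c t else h (t - length LS))" for t
    have "lc d (LS @ L) = lc d LS + lc (\<lambda>t. d (t + length LS)) L" by (rule lc_append)
    also have "lc d LS = lc c LS" unfolding lc_def d_def by (auto intro!: sum.cong)
    also have "(\<lambda>t. d (t + length LS)) = h" unfolding d_def by auto
    finally have "w = lc d (LS @ L)" using w by simp
    then show "w \<in> span (S \<union> set L)" unfolding sp by simp
  qed
qed

lemma lc_cong: "(\<And>t. t < length L \<Longrightarrow> c t = d t) \<Longrightarrow> lc c L = lc d L"
  unfolding lc_def by (auto intro!: sum.cong)


lemma zero_in_span: assumes "finite S" "S \<subseteq> carrier_vec n" shows "0\<^sub>v n \<in> span S"
proof -
  obtain L where L: "set L = S" "span S = range (\<lambda>c. lc c L)" by (rule fin_list[OF assms])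
  have "0\<^sub>v n = lc (\<lambda>_. 0) L" by (rule eq_vecI) auto
  then show ?thesis unfolding L(2) by simp
qed

lemma L4:
  assumes S: "finite S" "S \<subseteq> carrier_vec n" and L: "set L \<subseteq> carrier_vec n"
  shows "measure_pmf.prob (unifc (length L)) {c. lc c L \<in> span S} * card (span (S \<union> set L)) = card (span S)"
  using L
proof (induction L rule: rev_induct)
  case Nil
  have "lc c [] = 0\<^sub>v n" for c by (rule eq_vecI) auto
  moreover have "0\<^sub>v n \<in> span S" using zero_in_span[OF S] .
  ultimately have "{c. lc c [] \<in> span S} = UNIV" by auto
  then show ?case by (simp add: unifc_def)
next
  case (snoc y L)
  let ?q = "CARD('a)"
  let ?m = "length L"
  let ?T = "S \<union> set L"
  let ?E0 = "{c. lc c L \<in> span S}"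
  define P0 where "P0 = measure_pmf.prob (unifc ?m) ?E0"
  have yc: "y \<in> carrier_vec n" and Lc: "set L \<subseteq> carrier_vec n" using snoc.prems by auto
  have IH: "P0 * card (span ?T) = card (span S)" using snoc.IH Lc unfolding P0_def by simp
  have T: "finite ?T" "?T \<subseteq> carrier_vec n" using S Lc by auto
  have notin: "?m \<notin> {..<?m}" by simp
  have lcupd: "lc (c(?m := a)) (L @ [y]) = lc c L + a \<cdot>\<^sub>v y" for c a
    unfolding lc_snoc[OF yc] by (simp add: lc_cong[of L "c(?m := a)" c])
  have "measure_pmf.prob (unifc (length (L @ [y]))) {c. lc c (L @ [y]) \<in> span S}
      = measure_pmf.expectation (pmf_of_set UNIV) (\<lambda>a. measure_pmf.prob (unifc ?m) {c. lc c L + a \<cdot>\<^sub>v y \<in> span S})"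
    unfolding length_append_singleton unifc_Suc prob_Pi_insert[OF finite_lessThan notin]
    by (simp add: lcupd unifc_def)
  also have "\<dots> = card (span S) / card (span (S \<union> set (L @ [y])))"
  proof (cases "y \<in> span ?T")
    case True
    then obtain s h where sh: "s \<in> span S" "y = s + lc h L" using span_union_list[OF S Lc] by blast
    have sc: "s \<in> carrier_vec n" using sh(1) span_carrier[OF S(2)] by blast
    have "measure_pmf.prob (unifc ?m) {c. lc c L + a \<cdot>\<^sub>v y \<in> span S} = P0" for a
    proof -
      define sh where "sh = (\<lambda>c t. if t < ?m then c t + a * h t else 0)"
      have "{c. lc c L + a \<cdot>\<^sub>v y \<in> span S} = sh -` ?E0"
      proof -
        have "lc c L + a \<cdot>\<^sub>v y = a \<cdot>\<^sub>v s + lc (sh c) L" for c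
          by (rule eq_vecI) (use sc in \<open>auto simp: sh(2) sh_def algebra_simps sum.distrib sum_distrib_left intro!: sum.cong\<close>)
        moreover have "a \<cdot>\<^sub>v s \<in> span S" by (rule smult_in_span[OF S(2) sh(1)])
        ultimately show ?thesis using span_add[OF S(2) \<open>a \<cdot>\<^sub>v s \<in> span S\<close>] by auto
      qed
      then have "measure_pmf.prob (unifc ?m) {c. lc c L + a \<cdot>\<^sub>v y \<in> span S}
          = measure_pmf.prob (map_pmf sh (unifc ?m)) ?E0" by simp
      also have "map_pmf sh (unifc ?m) = unifc ?m"
        unfolding sh_def by (rule unifc_shift)
      finally show ?thesis unfolding P0_def .
    qed
    then have "measure_pmf.expectation (pmf_of_set UNIV) (\<lambda>a. measure_pmf.prob (unifc ?m) {c. lc c L + a \<cdot>\<^sub>v y \<in> span S}) = P0"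
      by simp
    moreover have "span (S \<union> set (L @ [y])) = span ?T"
      using span_insert_in[OF T True] by (simp add: Un_insert_right)
    moreover have "card (span ?T) > 0" using T by (simp add: card_gt_0_iff) (use zero_in_span in blast)
    ultimately show ?thesis using IH by (simp add: field_simps)
  next
    case False
    have ev: "{c. lc c L + a \<cdot>\<^sub>v y \<in> span S} = (if a = 0 then ?E0 else {})" for a
    proof (cases "a = 0")
      case True
      have "lc c L + 0 \<cdot>\<^sub>v y = lc c L" for c by (rule eq_vecI) (use yc in auto)
      then show ?thesis using True by simp
    next
      case a: False
      have "lc c L + a \<cdot>\<^sub>v y \<notin> span S" for c
      proof
        assume w: "lc c L + a \<cdot>\<^sub>v y \<in> span S"
        let ?w = "lc c L + a \<cdot>\<^sub>v y"
        have "(1 / a) \<cdot>\<^sub>v ?w \<in> span S" by (rule smult_in_span[OF S(2) w])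
        moreover have "y = (1 / a) \<cdot>\<^sub>v ?w + lc (\<lambda>t. - c t / a) L"
          by (rule eq_vecI) (use yc a in \<open>auto simp: field_simps sum_divide_distrib[symmetric] sum_negf\<close>)
        ultimately have "y \<in> span ?T" using span_union_list[OF S Lc] by blast
        then show False using False by simp
      qed
      then show ?thesis using a by auto
    qed
    have "measure_pmf.expectation (pmf_of_set UNIV) (\<lambda>a. measure_pmf.prob (unifc ?m) {c. lc c L + a \<cdot>\<^sub>v y \<in> span S})
        = measure_pmf.expectation (pmf_of_set (UNIV::'a set)) (\<lambda>a. if a = 0 then P0 else 0)"
      unfolding ev P0_def by (intro arg_cong[where f = "measure_pmf.expectation (pmf_of_set UNIV)"] ext) simp
    also have "\<dots> = P0 / ?q"
      unfolding expectation_bool by (simp add: measure_pmf_of_set)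
    finally have "measure_pmf.expectation (pmf_of_set UNIV) (\<lambda>a. measure_pmf.prob (unifc ?m) {c. lc c L + a \<cdot>\<^sub>v y \<in> span S}) = P0 / ?q" .
    moreover have "card (span (S \<union> set (L @ [y]))) = ?q * card (span ?T)"
      using card_span_insert[OF T yc False] by (simp add: Un_insert_right)
    moreover have "card (span ?T) > 0" using T by (simp add: card_gt_0_iff) (use zero_in_span in blast)
    moreover have "P0 = card (span S) / card (span ?T)" using IH calculation(3) by (simp add: field_simps)
    ultimately show ?thesis by simp
  qed
  finally show ?case
  proof -
    assume e: "measure_pmf.prob (unifc (length (L @ [y]))) {c. lc c (L @ [y]) \<in> span S} = card (span S) / card (span (S \<union> set (L @ [y])))"
    have "card (span (S \<union> set (L @ [y]))) > 0"
      using T snoc.prems by (simp add: card_gt_0_iff) (use zero_in_span in blast)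
    then show ?thesis unfolding e by simp
  qed
qed

lemma L4':
  assumes D: "finite D" "D \<subseteq> carrier_vec n" and L: "set L \<subseteq> carrier_vec n"
    and full: "span (D \<union> set L) = carrier_vec n"
    and S: "finite S" "S \<subseteq> carrier_vec n" "D \<subseteq> S"
  shows "measure_pmf.prob (map_pmf (\<lambda>c. lc c L) (unifc (length L))) (span S) = card (span S) / CARD('a) ^ n"
proof -
  have "span (D \<union> set L) \<subseteq> span (S \<union> set L)" by (rule span_is_monotone) (use S in auto)
  then have "span (S \<union> set L) = carrier_vec n" using full span_carrier[of "S \<union> set L"] S L by auto
  then have "card (span (S \<union> set L)) = CARD('a) ^ n" by (simp add: card_carrier_vec')
  then show ?thesis using L4[OF S(1,2) L] by (simp add: vimage_def field_simps)
qed


lemma lc_in_span: assumes "set L \<subseteq> carrier_vec n" shows "lc c L \<in> span (set L)"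
  unfolding span_lc[OF assms] by simp

lemma core_Y:
  fixes X :: "nat \<Rightarrow> 'a vec" and Bl :: "nat list" and dflt' :: "nat \<Rightarrow> 'a"
  assumes fin: "finite A" "finite E" "finite R" and Bl: "set Bl \<subseteq> A \<union> E" "E \<subseteq> set Bl"
    and X: "X ` (A \<union> E) \<subseteq> carrier_vec n"
  shows "measure_pmf.prob (Pi_pmf R dflt' (\<lambda>_. unifc (length Bl)))
            {Y. span (X ` A \<union> (\<lambda>i. lc (Y i) (map X Bl)) ` R) = carrier_vec n}
       = (if span (X ` A \<union> X ` E) = carrier_vec n then Pfull CARD('a) (card R) (n - cd (X ` A)) else 0)"
proof -
  define D where "D = X ` A"
  define L where "L = map X Bl"
  define pL where "pL = map_pmf (\<lambda>c. lc c L) (unifc (length Bl))"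
  have D: "finite D" "D \<subseteq> carrier_vec n" using fin X by (auto simp: D_def)
  have L: "set L \<subseteq> carrier_vec n" using X Bl by (auto simp: L_def)
  have DL: "D \<union> set L = X ` A \<union> X ` E" using Bl by (auto simp: D_def L_def)
  have "Pi_pmf R (lc dflt' L) (\<lambda>_. pL) = map_pmf (\<lambda>h. (\<lambda>c. lc c L) \<circ> h) (Pi_pmf R dflt' (\<lambda>_. unifc (length Bl)))"
    unfolding pL_def by (rule Pi_pmf_map) (use fin in auto)
  then have "measure_pmf.prob (Pi_pmf R dflt' (\<lambda>_. unifc (length Bl)))
            {Y. span (X ` A \<union> (\<lambda>i. lc (Y i) (map X Bl)) ` R) = carrier_vec n}
      = measure_pmf.prob (Pi_pmf R (lc dflt' L) (\<lambda>_. pL)) {Z. span (D \<union> Z ` R) = carrier_vec n}"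
    by (simp add: vimage_def D_def L_def image_comp o_def)
  also have "\<dots> = (if span (X ` A \<union> X ` E) = carrier_vec n then Pfull CARD('a) (card R) (n - cd (X ` A)) else 0)"
  proof (cases "span (D \<union> set L) = carrier_vec n")
    case True
    have "measure_pmf.prob (Pi_pmf R (lc dflt' L) (\<lambda>_. pL)) {Z. span (D \<union> Z ` R) = carrier_vec n}
        = Pfull CARD('a) (card R) (n - cd D)"
    proof (rule LemF[of pL D])
      show "set_pmf pL \<subseteq> carrier_vec n" unfolding pL_def by auto
      show "measure_pmf.prob pL (span S) = real (card (span S)) / real (CARD('a) ^ n)"
        if "finite S" "S \<subseteq> carrier_vec n" "D \<subseteq> S" for S
        unfolding pL_def using L4'[OF D L True that] by (simp add: L_def)
    qed (use fin D in auto)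
    then show ?thesis using True DL by (simp add: D_def)
  next
    case False
    have "span (D \<union> Z ` R) \<noteq> carrier_vec n" if Z: "Z \<in> set_pmf (Pi_pmf R (lc dflt' L) (\<lambda>_. pL))" for Z
    proof
      assume full: "span (D \<union> Z ` R) = carrier_vec n"
      have DLc: "D \<union> set L \<subseteq> carrier_vec n" using D L by auto
      have "Z ` R \<subseteq> span (set L)"
      proof
        fix z assume "z \<in> Z ` R"
        then obtain i where i: "i \<in> R" "z = Z i" by auto
        have "Z i \<in> set_pmf pL" using Z i set_Pi_pmf_subset'[OF fin(3), of "lc dflt' L" "\<lambda>_. pL"]
          by (auto simp: PiE_dflt_def)
        then show "z \<in> span (set L)" using i lc_in_span[OF L] unfolding pL_def by auto
      qed
      moreover have "span (set L) \<subseteq> span (D \<union> set L)" by (rule span_is_monotone) auto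
      moreover have "D \<subseteq> span (D \<union> set L)" using in_own_span[OF DLc] by auto
      ultimately have "D \<union> Z ` R \<subseteq> span (D \<union> set L)" by blast
      then have "span (D \<union> Z ` R) \<subseteq> span (D \<union> set L)" by (rule span_subsetI[OF DLc])
      then have "carrier_vec n \<subseteq> span (D \<union> set L)" using full by simp
      then show False using False span_carrier[OF DLc] by blast
    qed
    then have "measure_pmf.prob (Pi_pmf R (lc dflt' L) (\<lambda>_. pL)) {Z. span (D \<union> Z ` R) = carrier_vec n} = 0"
      by (subst measure_pmf_zero_iff) auto
    then show ?thesis using False DL by simp
  qed
  finally show ?thesis .
qed


lemma supp_Pi_unif:
  fixes X :: "nat \<Rightarrow> 'a vec"
  assumes "finite I" "X \<in> set_pmf (Pi_pmf I dflt (\<lambda>_. pmf_of_set (carrier_vec n)))"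
  shows "X ` I \<subseteq> carrier_vec n"
proof -
  have "set_pmf (pmf_of_set (carrier_vec n)) = (carrier_vec n :: 'a vec set)" using cv_ne by simp
  moreover have "X \<in> PiE_dflt I dflt (set_pmf \<circ> (\<lambda>_. pmf_of_set (carrier_vec n)))"
    using set_Pi_pmf_subset'[OF assms(1), of dflt "\<lambda>_. pmf_of_set (carrier_vec n)"] assms(2) by blast
  ultimately show ?thesis by (auto simp: PiE_dflt_def)
qed

lemma core_X3:
  fixes A E :: "nat set" and dflt :: "'a vec"
  assumes fin: "finite A" "finite E" and disj: "A \<inter> E = {}" and i: "i \<le> n"
  shows "measure_pmf.prob (Pi_pmf (A \<union> E) dflt (\<lambda>_. pmf_of_set (carrier_vec n)))
           {X. cd (X ` A) = i \<and> span (X ` A \<union> X ` E) = carrier_vec n}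
         = Prank CARD('a) i (card A) n * Pfull CARD('a) (card E) (n - i)"
proof -
  let ?U = "pmf_of_set (carrier_vec n) :: 'a vec pmf"
  let ?M = "Pi_pmf A dflt (\<lambda>_. ?U)"
  let ?N = "Pi_pmf E dflt (\<lambda>_. ?U)"
  let ?mg = "\<lambda>(f :: nat \<Rightarrow> 'a vec, g :: nat \<Rightarrow> 'a vec) x. if x \<in> A then f x else g x"
  have PX: "Pi_pmf (A \<union> E) dflt (\<lambda>_. ?U) = map_pmf ?mg (pair_pmf ?M ?N)"
    by (rule Pi_pmf_union) (use fin disj in auto)
  have img: "?mg (f, g) ` A = f ` A" "?mg (f, g) ` E = g ` E" for f g
    using disj by (auto simp: image_def)
  have "measure_pmf.prob (Pi_pmf (A \<union> E) dflt (\<lambda>_. ?U)) {X. cd (X ` A) = i \<and> span (X ` A \<union> X ` E) = carrier_vec n}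
      = measure_pmf.prob (pair_pmf ?M ?N) {(f, g). cd (f ` A) = i \<and> span (f ` A \<union> g ` E) = carrier_vec n}"
  proof -
    have "?mg -` {X. cd (X ` A) = i \<and> span (X ` A \<union> X ` E) = carrier_vec n}
        = {(f, g). cd (f ` A) = i \<and> span (f ` A \<union> g ` E) = carrier_vec n}"
    proof (intro Set.set_eqI iffI)
      fix x assume "x \<in> ?mg -` {X. cd (X ` A) = i \<and> span (X ` A \<union> X ` E) = carrier_vec n}"
      then show "x \<in> {(f, g). cd (f ` A) = i \<and> span (f ` A \<union> g ` E) = carrier_vec n}"
        using img[of "fst x" "snd x"] by (simp add: case_prod_beta)
    next
      fix x assume "x \<in> {(f, g). cd (f ` A) = i \<and> span (f ` A \<union> g ` E) = carrier_vec n}"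
      then show "x \<in> ?mg -` {X. cd (X ` A) = i \<and> span (X ` A \<union> X ` E) = carrier_vec n}"
        using img[of "fst x" "snd x"] by (simp add: case_prod_beta)
    qed
    then show ?thesis unfolding PX measure_map_pmf by simp
  qed
  also have "pair_pmf ?M ?N = bind_pmf ?M (\<lambda>f. map_pmf (Pair f) ?N)"
    by (simp add: pair_pmf_def map_pmf_def)
  also have "measure_pmf.prob (bind_pmf ?M (\<lambda>f. map_pmf (Pair f) ?N)) {(f, g). cd (f ` A) = i \<and> span (f ` A \<union> g ` E) = carrier_vec n}
      = measure_pmf.expectation ?M (\<lambda>f. measure_pmf.prob ?N {g. cd (f ` A) = i \<and> span (f ` A \<union> g ` E) = carrier_vec n})"
    unfolding prob_bind_pmf by (simp add: vimage_def)
  also have "\<dots> = measure_pmf.expectation ?M (\<lambda>f. if cd (f ` A) = i then Pfull CARD('a) (card E) (n - i) else 0)"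
  proof (rule integral_cong_AE)
    show "AE f in measure_pmf ?M. measure_pmf.prob ?N {g. cd (f ` A) = i \<and> span (f ` A \<union> g ` E) = carrier_vec n}
        = (if cd (f ` A) = i then Pfull CARD('a) (card E) (n - i) else 0)"
    proof (rule AE_pmfI)
      fix f assume f: "f \<in> set_pmf ?M"
      have fA: "finite (f ` A)" "f ` A \<subseteq> carrier_vec n" using supp_Pi_unif[OF fin(1) f] fin by auto
      show "measure_pmf.prob ?N {g. cd (f ` A) = i \<and> span (f ` A \<union> g ` E) = carrier_vec n}
        = (if cd (f ` A) = i then Pfull CARD('a) (card E) (n - i) else 0)"
      proof (cases "cd (f ` A) = i")
        case True
        have "measure_pmf.prob ?N {g. span (f ` A \<union> g ` E) = carrier_vec n} = Pfull CARD('a) (card E) (n - cd (f ` A))"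
        proof (rule LemF[of ?U "{}"])
          show "set_pmf ?U \<subseteq> carrier_vec n" using cv_ne by simp
          show "measure_pmf.prob ?U (span S) = real (card (span S)) / real (CARD('a) ^ n)"
            if "finite S" "S \<subseteq> carrier_vec n" "{} \<subseteq> S" for S
            using prob_unif_span[OF that(2)] by simp
        qed (use fin fA in auto)
        then show ?thesis using True by simp
      qed simp
    qed
  qed auto
  also have "\<dots> = Pfull CARD('a) (card E) (n - i) * measure_pmf.prob ?M {f. cd (f ` A) = i}"
    unfolding expectation_bool by simp
  also have "\<dots> = Prank CARD('a) i (card A) n * Pfull CARD('a) (card E) (n - i)"
    using LemR[OF fin(1) i] by simp
  finally show ?thesis .
qed

lemma core:
  fixes A E R :: "nat set" and Bl :: "nat list" and dflt' :: "nat \<Rightarrow> 'a" and dflt :: "'a vec"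
  assumes fin: "finite A" "finite E" "finite R" and disj: "A \<inter> E = {}"
    and Bl: "set Bl \<subseteq> A \<union> E" "E \<subseteq> set Bl"
  shows "measure_pmf.expectation (Pi_pmf (A \<union> E) dflt (\<lambda>_. pmf_of_set (carrier_vec n)))
     (\<lambda>X. measure_pmf.prob (Pi_pmf R dflt' (\<lambda>_. unifc (length Bl)))
            {Y. span (X ` A \<union> (\<lambda>i. lc (Y i) (map X Bl)) ` R) = carrier_vec n})
   = (\<Sum>i\<le>n. Prank CARD('a) i (card A) n * Pfull CARD('a) (card E) (n - i) * Pfull CARD('a) (card R) (n - i))"
proof -
  let ?PX = "Pi_pmf (A \<union> E) dflt (\<lambda>_. pmf_of_set (carrier_vec n)) :: (nat \<Rightarrow> 'a vec) pmf"
  define g where "g ib = (if snd ib then Pfull CARD('a) (card R) (n - fst ib) else 0)" for ib :: "nat \<times> bool"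
  have "measure_pmf.expectation ?PX
     (\<lambda>X. measure_pmf.prob (Pi_pmf R dflt' (\<lambda>_. unifc (length Bl)))
            {Y. span (X ` A \<union> (\<lambda>i. lc (Y i) (map X Bl)) ` R) = carrier_vec n})
     = measure_pmf.expectation ?PX (\<lambda>X. g (cd (X ` A), span (X ` A \<union> X ` E) = carrier_vec n))"
  proof (rule integral_cong_AE)
    show "AE X in measure_pmf ?PX. measure_pmf.prob (Pi_pmf R dflt' (\<lambda>_. unifc (length Bl)))
            {Y. span (X ` A \<union> (\<lambda>i. lc (Y i) (map X Bl)) ` R) = carrier_vec n}
         = g (cd (X ` A), span (X ` A \<union> X ` E) = carrier_vec n)"
    proof (rule AE_pmfI)
      fix X assume "X \<in> set_pmf ?PX"
      then have X: "X ` (A \<union> E) \<subseteq> carrier_vec n" using supp_Pi_unif fin by blast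
      show "measure_pmf.prob (Pi_pmf R dflt' (\<lambda>_. unifc (length Bl)))
            {Y. span (X ` A \<union> (\<lambda>i. lc (Y i) (map X Bl)) ` R) = carrier_vec n}
         = g (cd (X ` A), span (X ` A \<union> X ` E) = carrier_vec n)"
        unfolding core_Y[OF fin Bl X] g_def by simp
    qed
  qed auto
  also have "\<dots> = (\<Sum>ib\<in>{..n} \<times> UNIV. g ib * measure_pmf.prob ?PX {X. (cd (X ` A), span (X ` A \<union> X ` E) = carrier_vec n) = ib})"
  proof (rule expectation_finite_range)
    fix X assume "X \<in> set_pmf ?PX"
    then have X: "X ` (A \<union> E) \<subseteq> carrier_vec n" using supp_Pi_unif fin by blast
    then have "cd (X ` A) \<le> n" using cd_le[of "X ` A"] fin by auto
    then show "(cd (X ` A), span (X ` A \<union> X ` E) = carrier_vec n) \<in> {..n} \<times> UNIV" by simp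
  qed simp
  also have "\<dots> = (\<Sum>ib\<in>{..n} \<times> UNIV. g ib * measure_pmf.prob ?PX {X. cd (X ` A) = fst ib \<and> (span (X ` A \<union> X ` E) = carrier_vec n) = snd ib})"
    by (rule sum.cong[OF refl]) (simp add: prod_eq_iff)
  also have "\<dots> = (\<Sum>i\<le>n. \<Sum>b\<in>UNIV. g (i, b) * measure_pmf.prob ?PX {X. (cd (X ` A), span (X ` A \<union> X ` E) = carrier_vec n) = (i, b)})"
    by (simp add: sum.cartesian_product case_prod_beta)
  also have "\<dots> = (\<Sum>i\<le>n. Pfull CARD('a) (card R) (n - i) * measure_pmf.prob ?PX {X. cd (X ` A) = i \<and> span (X ` A \<union> X ` E) = carrier_vec n})"
    by (simp add: UNIV_bool g_def)
  also have "\<dots> = (\<Sum>i\<le>n. Prank CARD('a) i (card A) n * Pfull CARD('a) (card E) (n - i) * Pfull CARD('a) (card R) (n - i))"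
    by (rule sum.cong) (use core_X3[OF fin(1,2) disj] in auto)
  finally show ?thesis .
qed

end

lemma mat_rows_pmf:
  fixes dflt :: "'a::{finite,zero} vec"
  shows "map_pmf (\<lambda>C j. if j < nr then row C j else dflt) (pmf_of_set (carrier_mat nr nc :: 'a mat set))
         = Pi_pmf {..<nr} dflt (\<lambda>_. pmf_of_set (carrier_vec nc))"
proof -
  let ?P = "PiE_dflt {..<nr} dflt (\<lambda>_. carrier_vec nc :: 'a vec set)"
  define phi where "phi = (\<lambda>(C :: 'a mat) j. if j < nr then row C j else dflt)"
  define g where "g = (\<lambda>f. mat nr nc (\<lambda>(i, j). f i $ j) :: 'a mat)"
  have z: "0\<^sub>v nc \<in> (carrier_vec nc :: 'a vec set)" by simp
  then have cne: "carrier_vec nc \<noteq> ({} :: 'a vec set)" by (metis empty_iff)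
  have e1: "Pi_pmf {..<nr} dflt (\<lambda>_. pmf_of_set (carrier_vec nc)) = pmf_of_set ?P"
    by (rule Pi_pmf_of_set) (use cne in simp_all)
  have bij: "bij_betw phi (carrier_mat nr nc) ?P"
  proof (rule bij_betwI[where g = g])
    show "phi \<in> carrier_mat nr nc \<rightarrow> ?P"
      by (auto simp: PiE_dflt_def phi_def)
    show "g \<in> ?P \<rightarrow> carrier_mat nr nc" by (auto simp: g_def)
    show "g (phi C) = C" if "C \<in> carrier_mat nr nc" for C
      using that unfolding g_def phi_def by (intro eq_matI) auto
    show "phi (g f) = f" if f: "f \<in> ?P" for f
    proof
      fix j
      show "phi (g f) j = f j"
      proof (cases "j < nr")
        case True
        then have "f j \<in> carrier_vec nc" using f by (auto simp: PiE_dflt_def)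
        then show ?thesis using True unfolding phi_def g_def by (intro eq_vecI) auto
      next
        case False
        then show ?thesis using f unfolding phi_def by (auto simp: PiE_dflt_def)
      qed
    qed
  qed
  have fin: "finite (carrier_mat nr nc :: 'a mat set)"
    using bij_betw_finite[OF bij] by (auto intro: finite_PiE_dflt)
  have "0\<^sub>m nr nc \<in> (carrier_mat nr nc :: 'a mat set)" by simp
  then have ne: "carrier_mat nr nc \<noteq> ({} :: 'a mat set)" by (metis empty_iff)
  show ?thesis unfolding e1 phi_def[symmetric] by (rule map_pmf_of_set_bij_betw[OF bij ne fin])
qed

lemma mat_coef_pmf:
  fixes dflt :: "nat \<Rightarrow> 'a::{finite,zero}"
  shows "map_pmf (\<lambda>G i. if i < nr then (\<lambda>t. if t < nc then G $$ (i, t) else 0) else dflt)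
           (pmf_of_set (carrier_mat nr nc :: 'a mat set))
         = Pi_pmf {..<nr} dflt (\<lambda>_. unifc nc)"
proof -
  let ?D = "PiE_dflt {..<nc} 0 (\<lambda>_. UNIV) :: (nat \<Rightarrow> 'a) set"
  let ?P = "PiE_dflt {..<nr} dflt (\<lambda>_. ?D)"
  define phi where "phi = (\<lambda>(G :: 'a mat) i. if i < nr then (\<lambda>t. if t < nc then G $$ (i, t) else 0) else dflt)"
  define g where "g = (\<lambda>f. mat nr nc (\<lambda>(i, j). f i j) :: 'a mat)"
  have e1: "Pi_pmf {..<nr} dflt (\<lambda>_. unifc nc) = pmf_of_set ?P"
    unfolding unifc_alt by (rule Pi_pmf_of_set) (auto intro: finite_PiE_dflt)
  have bij: "bij_betw phi (carrier_mat nr nc) ?P"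
  proof (rule bij_betwI[where g = g])
    show "phi \<in> carrier_mat nr nc \<rightarrow> ?P"
      by (auto simp: PiE_dflt_def phi_def)
    show "g \<in> ?P \<rightarrow> carrier_mat nr nc" by (auto simp: g_def)
    show "g (phi G) = G" if "G \<in> carrier_mat nr nc" for G
      using that unfolding g_def phi_def by (intro eq_matI) auto
    show "phi (g f) = f" if f: "f \<in> ?P" for f
      using f unfolding phi_def g_def by (auto simp: PiE_dflt_def fun_eq_iff)
  qed
  have fin: "finite (carrier_mat nr nc :: 'a mat set)"
    using bij_betw_finite[OF bij] by (auto intro!: finite_PiE_dflt)
  have "0\<^sub>m nr nc \<in> (carrier_mat nr nc :: 'a mat set)" by simp
  then have ne: "carrier_mat nr nc \<noteq> ({} :: 'a mat set)" by (metis empty_iff)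
  show ?thesis unfolding e1 phi_def[symmetric] by (rule map_pmf_of_set_bij_betw[OF bij ne fin])
qed

lemma row_mult_lc:
  fixes G M :: "'a::{finite,field} mat"
  assumes G: "G \<in> carrier_mat nr m" and M: "M \<in> carrier_mat m K" and i: "i < nr"
  shows "row (G * M) i = fvs.lc K (\<lambda>t. G $$ (i, t)) (rows M)"
proof -
  interpret fvs "TYPE('a)" K .
  show ?thesis
  proof (rule eq_vecI)
    fix j assume j: "j < dim_vec (lc (\<lambda>t. G $$ (i, t)) (rows M))"
    then have j': "j < K" by simp
    show "row (G * M) i $ j = lc (\<lambda>t. G $$ (i, t)) (rows M) $ j"
      using G M i j' by (simp add: scalar_prod_def lessThan_atLeast0)
  qed (use M in simp)
qed


lemma finite_carrier_mat': "finite (carrier_mat nr nc :: 'a::finite mat set)"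
proof -
  have "carrier_mat nr nc \<subseteq> (\<lambda>f. mat nr nc f) ` (({..<nr} \<times> {..<nc}) \<rightarrow>\<^sub>E (UNIV :: 'a set))"
  proof
    fix A :: "'a mat" assume A: "A \<in> carrier_mat nr nc"
    have "A = mat nr nc (restrict (\<lambda>ij. A $$ ij) ({..<nr} \<times> {..<nc}))"
      using A by (intro eq_matI) auto
    moreover have "restrict (\<lambda>ij. A $$ ij) ({..<nr} \<times> {..<nc}) \<in> ({..<nr} \<times> {..<nc}) \<rightarrow>\<^sub>E (UNIV :: 'a set)"
      by (simp only: restrict_PiE_iff) simp
    ultimately show "A \<in> (\<lambda>f. mat nr nc f) ` (({..<nr} \<times> {..<nc}) \<rightarrow>\<^sub>E (UNIV :: 'a set))"
      by (rule image_eqI)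
  qed
  then show ?thesis by (rule finite_subset) (auto intro!: finite_imageI finite_PiE)
qed

lemma restr_prob:
  assumes "finite I" "J \<subseteq> I" "\<And>Y. P (\<lambda>x. if x \<in> J then Y x else d) = P Y"
  shows "measure_pmf.prob (Pi_pmf J d p) {Y. P Y} = measure_pmf.prob (Pi_pmf I d p) {Y. P Y}"
  unfolding Pi_pmf_subset[OF assms(1,2)] using assms(3) by (simp add: vimage_def)

lemma restr_exp:
  fixes k :: "_ \<Rightarrow> real"
  assumes "finite I" "J \<subseteq> I" "\<And>Y. k (\<lambda>x. if x \<in> J then Y x else d) = k Y"
  shows "measure_pmf.expectation (Pi_pmf J d p) k = measure_pmf.expectation (Pi_pmf I d p) k"
  unfolding Pi_pmf_subset[OF assms(1,2)] using assms(3) by simp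

context fvs begin

lemma row_rank_full:
  assumes "set ws \<subseteq> carrier_vec n"
  shows "row_rank n (mat_of_rows n ws) = n \<longleftrightarrow> span (set ws) = carrier_vec n"
  unfolding row_rank_def rank_def using dim_full_iff[OF assms] assms by simp

lemma succ_ev:
  fixes e1 e2 e3 :: "nat \<Rightarrow> bool" and C G :: "'a mat" and NS NR :: nat
  defines "jsR \<equiv> filter (\<lambda>j. \<not> e2 j) [0..<NS]"
    and "A \<equiv> {j. j < NS \<and> \<not> e1 j}" and "R \<equiv> {i. i < NR \<and> \<not> e3 i}"
    and "phi \<equiv> (\<lambda>j. if j < NS then row C j else 0\<^sub>v n)"
    and "psi \<equiv> (\<lambda>i. if i < NR then (\<lambda>t. if t < length (filter (\<lambda>j. \<not> e2 j) [0..<NS]) then G $$ (i, t) else 0) else (\<lambda>_. 0))"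
  assumes C: "C \<in> carrier_mat NS n" and G: "G \<in> carrier_mat NR (length jsR)"
  shows "(row_rank n (mat_of_rows n (sel_rows n C (filter (\<lambda>j. \<not> e1 j) [0..<NS])
            @ sel_rows n (G * mat_of_rows n (sel_rows n C jsR)) (filter (\<lambda>i. \<not> e3 i) [0..<NR]))) = n)
     \<longleftrightarrow> span (phi ` A \<union> (\<lambda>i. lc (psi i) (map phi jsR)) ` R) = carrier_vec n"
proof -
  define CSR where "CSR = mat_of_rows n (sel_rows n C jsR)"
  have jsR: "set jsR \<subseteq> {..<NS}" unfolding jsR_def by auto
  have rowsC: "set (map (row C) jsR) \<subseteq> carrier_vec n" using jsR C by auto
  have CSR: "CSR \<in> carrier_mat (length jsR) n" unfolding CSR_def sel_rows_def
    using mat_of_rows_carrier[of n "map (row C) jsR"] by simp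
  have GC: "G * CSR \<in> carrier_mat NR n" using G CSR by simp
  define ws where "ws = sel_rows n C (filter (\<lambda>j. \<not> e1 j) [0..<NS]) @ sel_rows n (G * CSR) (filter (\<lambda>i. \<not> e3 i) [0..<NR])"
  have wsc: "set ws \<subseteq> carrier_vec n" unfolding ws_def sel_rows_def using C GC by auto
  have "set ws = row C ` A \<union> row (G * CSR) ` R"
    unfolding ws_def sel_rows_def A_def R_def by auto
  also have "row C ` A = phi ` A" unfolding A_def phi_def by auto
  also have "row (G * CSR) ` R = (\<lambda>i. lc (psi i) (map phi jsR)) ` R"
  proof (rule image_cong[OF refl])
    fix i assume "i \<in> R"
    then have i: "i < NR" unfolding R_def by auto
    have "row (G * CSR) i = lc (\<lambda>t. G $$ (i, t)) (rows CSR)"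
      using row_mult_lc[OF G CSR i] by simp
    also have "rows CSR = map (row C) jsR" unfolding CSR_def sel_rows_def using rowsC by simp
    also have "map (row C) jsR = map phi jsR" unfolding phi_def using jsR by auto
    also have "lc (\<lambda>t. G $$ (i, t)) (map phi jsR) = lc (psi i) (map phi jsR)"
      by (rule lc_cong) (use i in \<open>simp add: psi_def jsR_def\<close>)
    finally show "row (G * CSR) i = lc (psi i) (map phi jsR)" .
  qed
  finally have sw: "set ws = phi ` A \<union> (\<lambda>i. lc (psi i) (map phi jsR)) ` R" .
  show ?thesis using row_rank_full[OF wsc] unfolding sw unfolding ws_def CSR_def by simp
qed


lemma inner_prob:
  fixes e1 e2 e3 :: "nat \<Rightarrow> bool" and NS NR :: nat
  defines "jsR \<equiv> filter (\<lambda>j. \<not> e2 j) [0..<NS]"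
  shows "pmf (bind_pmf (pmf_of_set (carrier_mat NS n :: 'a mat set)) (\<lambda>C.
            bind_pmf (pmf_of_set (carrier_mat NR (length jsR) :: 'a mat set)) (\<lambda>G.
              return_pmf (row_rank n (mat_of_rows n (sel_rows n C (filter (\<lambda>j. \<not> e1 j) [0..<NS])
                @ sel_rows n (G * mat_of_rows n (sel_rows n C jsR)) (filter (\<lambda>i. \<not> e3 i) [0..<NR]))) = n)))) True
    = (\<Sum>i\<le>n. Prank CARD('a) i (card {j. j < NS \<and> \<not> e1 j}) n
          * Pfull CARD('a) (card ({j. j < NS \<and> \<not> e2 j} - {j. j < NS \<and> \<not> e1 j})) (n - i)
          * Pfull CARD('a) (card {i. i < NR \<and> \<not> e3 i}) (n - i))"
proof -
  define A where "A = {j. j < NS \<and> \<not> e1 j}"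
  define B where "B = {j. j < NS \<and> \<not> e2 j}"
  define R where "R = {i. i < NR \<and> \<not> e3 i}"
  define E where "E = B - A"
  define m1 where "m1 = length jsR"
  define s where "s C G = (row_rank n (mat_of_rows n (sel_rows n C (filter (\<lambda>j. \<not> e1 j) [0..<NS])
                @ sel_rows n (G * mat_of_rows n (sel_rows n C jsR)) (filter (\<lambda>i. \<not> e3 i) [0..<NR]))) = n)" for C G :: "'a mat"
  define phi where "phi C = (\<lambda>j. if j < NS then row C j else 0\<^sub>v n)" for C :: "'a mat"
  define psi where "psi G = (\<lambda>i. if i < NR then (\<lambda>t. if t < m1 then G $$ (i, t) else 0) else (\<lambda>_. 0 :: 'a))" for G :: "'a mat"
  define ev where "ev X Y = (span (X ` A \<union> (\<lambda>i. lc (Y i) (map X jsR)) ` R) = carrier_vec n)"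
    for X :: "nat \<Rightarrow> 'a vec" and Y :: "nat \<Rightarrow> nat \<Rightarrow> 'a"
  define k where "k X = measure_pmf.prob (Pi_pmf R (\<lambda>_. 0) (\<lambda>_. unifc m1)) {Y. ev X Y}" for X
  let ?UC = "pmf_of_set (carrier_mat NS n :: 'a mat set)"
  let ?UG = "pmf_of_set (carrier_mat NR m1 :: 'a mat set)"
  have finR: "finite R" "R \<subseteq> {..<NR}" unfolding R_def by auto
  have finAE: "finite (A \<union> E)" "A \<union> E \<subseteq> {..<NS}" unfolding A_def E_def B_def by auto
  have setjs: "set jsR = B" unfolding jsR_def B_def by auto
  have cne: "carrier_mat NS n \<noteq> ({} :: 'a mat set)" "finite (carrier_mat NS n :: 'a mat set)"
       "carrier_mat NR m1 \<noteq> ({} :: 'a mat set)" "finite (carrier_mat NR m1 :: 'a mat set)"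
  proof -
    have "0\<^sub>m NS n \<in> (carrier_mat NS n :: 'a mat set)" "0\<^sub>m NR m1 \<in> (carrier_mat NR m1 :: 'a mat set)" by simp_all
    then show "carrier_mat NS n \<noteq> ({} :: 'a mat set)" "carrier_mat NR m1 \<noteq> ({} :: 'a mat set)"
      by (metis empty_iff)+
    show "finite (carrier_mat NS n :: 'a mat set)" "finite (carrier_mat NR m1 :: 'a mat set)"
      using finite_carrier_mat' by auto
  qed
  have "pmf (bind_pmf ?UC (\<lambda>C. bind_pmf (pmf_of_set (carrier_mat NR (length jsR) :: 'a mat set)) (\<lambda>G. return_pmf (s C G)))) True
      = measure_pmf.prob (bind_pmf ?UC (\<lambda>C. map_pmf (s C) ?UG)) {True}"
    by (simp add: map_pmf_def measure_pmf_single m1_def)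
  also have "\<dots> = measure_pmf.expectation ?UC (\<lambda>C. measure_pmf.prob ?UG {G. s C G})"
    by (simp add: prob_bind_pmf vimage_def)
  also have "\<dots> = measure_pmf.expectation ?UC (\<lambda>C. k (phi C))"
  proof (rule integral_cong_AE)
    show "AE C in measure_pmf ?UC. measure_pmf.prob ?UG {G. s C G} = k (phi C)"
    proof (rule AE_pmfI)
      fix C assume "C \<in> set_pmf ?UC"
      then have C: "C \<in> carrier_mat NS n" using cne by simp
      have sev: "s C G = ev (phi C) (psi G)" if G: "G \<in> carrier_mat NR m1" for G
      proof -
        have G': "G \<in> carrier_mat NR (length (filter (\<lambda>j. \<not> e2 j) [0..<NS]))"
          using G by (simp add: m1_def jsR_def)
        show ?thesis
          unfolding s_def ev_def phi_def psi_def m1_def A_def R_def jsR_def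
          by (rule succ_ev[OF C G'])
      qed
      have seq: "{G. s C G} \<inter> set_pmf ?UG = {G. ev (phi C) (psi G)} \<inter> set_pmf ?UG"
        using sev cne by auto
      have "measure_pmf.prob ?UG {G. s C G} = measure_pmf.prob ?UG {G. ev (phi C) (psi G)}"
        using seq by (metis measure_Int_set_pmf)
      also have "\<dots> = measure_pmf.prob (map_pmf psi ?UG) {Y. ev (phi C) Y}"
        by (simp add: vimage_def)
      also have "map_pmf psi ?UG = Pi_pmf {..<NR} (\<lambda>_. 0) (\<lambda>_. unifc m1)"
        unfolding psi_def by (rule mat_coef_pmf)
      also have "measure_pmf.prob (Pi_pmf {..<NR} (\<lambda>_. 0) (\<lambda>_. unifc m1)) {Y. ev (phi C) Y} = k (phi C)"
        unfolding k_def
      proof (rule restr_prob[symmetric])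
        fix Y :: "nat \<Rightarrow> nat \<Rightarrow> 'a"
        show "ev (phi C) (\<lambda>x. if x \<in> R then Y x else (\<lambda>_. 0)) = ev (phi C) Y"
          unfolding ev_def by (simp cong: image_cong)
      qed (use finR in auto)
      finally show "measure_pmf.prob ?UG {G. s C G} = k (phi C)" .
    qed
  qed auto
  also have "\<dots> = measure_pmf.expectation (map_pmf phi ?UC) k" by simp
  also have "map_pmf phi ?UC = Pi_pmf {..<NS} (0\<^sub>v n) (\<lambda>_. pmf_of_set (carrier_vec n))"
    unfolding phi_def by (rule mat_rows_pmf)
  also have "measure_pmf.expectation (Pi_pmf {..<NS} (0\<^sub>v n) (\<lambda>_. pmf_of_set (carrier_vec n))) k
      = measure_pmf.expectation (Pi_pmf (A \<union> E) (0\<^sub>v n) (\<lambda>_. pmf_of_set (carrier_vec n))) k"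
  proof (rule restr_exp[symmetric])
    fix X :: "nat \<Rightarrow> 'a vec"
    have i: "(\<lambda>x. if x \<in> A \<union> E then X x else 0\<^sub>v n) ` A = X ` A" by auto
    have m: "map (\<lambda>x. if x \<in> A \<union> E then X x else 0\<^sub>v n) jsR = map X jsR"
      using setjs unfolding E_def by auto
    show "k (\<lambda>x. if x \<in> A \<union> E then X x else 0\<^sub>v n) = k X"
      unfolding k_def ev_def i m by (rule refl)
  qed (use finAE in auto)
  also have "\<dots> = (\<Sum>i\<le>n. Prank CARD('a) i (card A) n * Pfull CARD('a) (card E) (n - i) * Pfull CARD('a) (card R) (n - i))"
    unfolding k_def ev_def m1_def
    by (rule core) (use finAE finR setjs in \<open>auto simp: E_def\<close>)
  finally show ?thesis unfolding s_def A_def B_def R_def E_def .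
qed

end




lemma M1:
  fixes K NS NR :: nat and eSD eSR eRD :: real
  shows "relay_success TYPE('a::{finite,field}) K NS NR eSD eSR eRD =
    bind_pmf (Pi_pmf {..<NS} False (\<lambda>_. bernoulli_pmf eSR)) (\<lambda>e2.
    bind_pmf (Pi_pmf {..<NS} False (\<lambda>_. bernoulli_pmf eSD)) (\<lambda>e1.
    bind_pmf (Pi_pmf {..<NR} False (\<lambda>_. bernoulli_pmf eRD)) (\<lambda>e3.
    bind_pmf (pmf_of_set (carrier_mat NS K :: 'a mat set)) (\<lambda>C.
            bind_pmf (pmf_of_set (carrier_mat NR (length (filter (\<lambda>j. \<not> e2 j) [0..<NS])) :: 'a mat set)) (\<lambda>G.
              return_pmf (row_rank K (mat_of_rows K (sel_rows K C (filter (\<lambda>j. \<not> e1 j) [0..<NS])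
                @ sel_rows K (G * mat_of_rows K (sel_rows K C (filter (\<lambda>j. \<not> e2 j) [0..<NS]))) (filter (\<lambda>i. \<not> e3 i) [0..<NR]))) = K))))))"
proof -
  let ?UC = "pmf_of_set (carrier_mat NS K :: 'a mat set)"
  let ?P1 = "Pi_pmf {..<NS} False (\<lambda>_. bernoulli_pmf eSD)"
  let ?P2 = "Pi_pmf {..<NS} False (\<lambda>_. bernoulli_pmf eSR)"
  let ?P3 = "Pi_pmf {..<NR} False (\<lambda>_. bernoulli_pmf eRD)"
  have c1: "\<And>(UGx :: 'a mat pmf) (F :: 'a mat \<Rightarrow> (nat \<Rightarrow> bool) \<Rightarrow> bool pmf).
      bind_pmf UGx (\<lambda>G. bind_pmf ?P3 (\<lambda>e3. F G e3)) = bind_pmf ?P3 (\<lambda>e3. bind_pmf UGx (\<lambda>G. F G e3))"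
    by (rule bind_commute_pmf)
  have c2: "\<And>(F :: 'a mat \<Rightarrow> (nat \<Rightarrow> bool) \<Rightarrow> bool pmf). bind_pmf ?UC (\<lambda>C. bind_pmf ?P1 (F C)) = bind_pmf ?P1 (\<lambda>e. bind_pmf ?UC (\<lambda>C. F C e))"
    by (rule bind_commute_pmf)
  have c3: "\<And>(F :: 'a mat \<Rightarrow> (nat \<Rightarrow> bool) \<Rightarrow> bool pmf). bind_pmf ?UC (\<lambda>C. bind_pmf ?P2 (F C)) = bind_pmf ?P2 (\<lambda>e. bind_pmf ?UC (\<lambda>C. F C e))"
    by (rule bind_commute_pmf)
  have c4: "\<And>(F :: 'a mat \<Rightarrow> (nat \<Rightarrow> bool) \<Rightarrow> bool pmf). bind_pmf ?UC (\<lambda>C. bind_pmf ?P3 (F C)) = bind_pmf ?P3 (\<lambda>e. bind_pmf ?UC (\<lambda>C. F C e))"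
    by (rule bind_commute_pmf)
  have c5: "\<And>(F :: (nat \<Rightarrow> bool) \<Rightarrow> (nat \<Rightarrow> bool) \<Rightarrow> bool pmf). bind_pmf ?P1 (\<lambda>e1. bind_pmf ?P2 (F e1)) = bind_pmf ?P2 (\<lambda>e. bind_pmf ?P1 (\<lambda>e1. F e1 e))"
    by (rule bind_commute_pmf)
  show ?thesis
    unfolding relay_success_def Let_def
    by (simp only: c1 c2 c3 c4 c5)
qed


lemma Pfull_zero: "a < b \<Longrightarrow> Pfull q a b = 0"
  unfolding Pfull_def by (rule prod_zero) (auto intro!: bexI[of _ a])

lemma Prank_zero: "a < r \<Longrightarrow> Prank q r a K = 0"
proof -
  assume "a < r"
  then have "(\<Prod>i<r. 1 - real q powi (int i - int a)) = 0"
    by (intro prod_zero) (auto intro!: bexI[of _ a])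
  then show ?thesis unfolding Prank_def by simp
qed

lemma Q_P2:
  assumes "r \<le> m" "r \<le> mD"
  shows "(\<Sum>i\<le>K. Prank q i mD K * Pfull q (m - r) (K - i) * Pfull q m' (K - i)) = P2 q (m' + mD) (m - r + mD) mD K"
proof -
  have lo: "nat (max 0 (max (int K - int (m' + mD) + int mD) (int K - int (m - r + mD) + int mD)))
      = max (K - m') (K - (m - r))"
    using assms by (simp add: max_def) linarith?
  show ?thesis
    unfolding P2_def lo
  proof (rule sum.mono_neutral_cong_right)
    show "finite {..K}" by simp
    show "{max (K - m') (K - (m - r))..min mD K} \<subseteq> {..K}" by auto
    show "\<forall>i\<in>{..K} - {max (K - m') (K - (m - r))..min mD K}.
            Prank q i mD K * Pfull q (m - r) (K - i) * Pfull q m' (K - i) = 0"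
    proof
      fix i assume i: "i \<in> {..K} - {max (K - m') (K - (m - r))..min mD K}"
      show "Prank q i mD K * Pfull q (m - r) (K - i) * Pfull q m' (K - i) = 0"
      proof (cases "mD < i")
        case True
        then show ?thesis by (simp add: Prank_zero)
      next
        case False
        then have "i < K - m' \<or> i < K - (m - r)" using i by auto
        then have "m' < K - i \<or> m - r < K - i" by auto
        then show ?thesis by (auto simp: Pfull_zero)
      qed
    qed
    show "Prank q i mD K * Pfull q (m - r) (K - i) * Pfull q m' (K - i) =
          Prank q i mD K * Pfull q (m' + mD - mD) (K - i) * Pfull q (m - r + mD - mD) (K - i)" for i
      by simp
  qed
qed

lemma Q_zero1:
  assumes "m' < K - mD"
  shows "(\<Sum>i\<le>K. Prank q i mD K * Pfull q (m - r) (K - i) * Pfull q m' (K - i)) = 0"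
proof (rule sum.neutral, rule ballI)
  fix i assume "i \<in> {..K}"
  show "Prank q i mD K * Pfull q (m - r) (K - i) * Pfull q m' (K - i) = 0"
  proof (cases "mD < i")
    case True then show ?thesis by (simp add: Prank_zero)
  next
    case False then have "m' < K - i" using assms by auto
    then show ?thesis by (simp add: Pfull_zero)
  qed
qed

lemma Q_zero2:
  assumes "m + mD < K"
  shows "(\<Sum>i\<le>K. Prank q i mD K * Pfull q (m - r) (K - i) * Pfull q m' (K - i)) = 0"
proof (rule sum.neutral, rule ballI)
  fix i assume "i \<in> {..K}"
  show "Prank q i mD K * Pfull q (m - r) (K - i) * Pfull q m' (K - i) = 0"
  proof (cases "mD < i")
    case True then show ?thesis by (simp add: Prank_zero)
  next
    case False then have "m - r < K - i" using assms by auto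
    then show ?thesis by (simp add: Pfull_zero)
  qed
qed

lemma exp_card_bern:
  fixes h :: "nat \<Rightarrow> real"
  assumes e: "0 \<le> e" "e \<le> 1"
  shows "measure_pmf.expectation (Pi_pmf {..<N} False (\<lambda>_. bernoulli_pmf e)) (\<lambda>f. h (card {j. j < N \<and> \<not> f j}))
       = (\<Sum>k\<le>N. Bin k N e * h k)"
proof -
  have eq: "{j. j < N \<and> \<not> f j} = {x\<in>{..<N}. \<not> f x}" for f :: "nat \<Rightarrow> bool" by auto
  have "measure_pmf.expectation (Pi_pmf {..<N} False (\<lambda>_. bernoulli_pmf e)) (\<lambda>f. h (card {j. j < N \<and> \<not> f j}))
      = (\<Sum>k\<in>{..N}. h k * measure_pmf.prob (Pi_pmf {..<N} False (\<lambda>_. bernoulli_pmf e)) {f. card {j. j < N \<and> \<not> f j} = k})"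
  proof (rule expectation_finite_range)
    fix f :: "nat \<Rightarrow> bool"
    have "card {j. j < N \<and> \<not> f j} \<le> card {..<N}" by (rule card_mono) auto
    then show "card {j. j < N \<and> \<not> f j} \<in> {..N}" by simp
  qed simp
  also have "\<dots> = (\<Sum>k\<le>N. Bin k N e * h k)"
    unfolding eq using prob_card_bern[OF finite_lessThan e, where d = False] by (simp add: mult.commute)
  finally show ?thesis .
qed

lemma exp_card_bern2:
  fixes g :: "nat \<Rightarrow> nat \<Rightarrow> real"
  assumes e: "0 \<le> e" "e \<le> 1" and Bs: "Bs \<subseteq> {..<N}"
  shows "measure_pmf.expectation (Pi_pmf {..<N} False (\<lambda>_. bernoulli_pmf e))
          (\<lambda>f. g (card {j. j < N \<and> \<not> f j}) (card ({j. j < N \<and> \<not> f j} \<inter> Bs)))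
       = (\<Sum>(mD, r)\<in>{(mD, r). r \<le> mD \<and> mD \<le> N \<and> r \<le> card Bs \<and> mD - r \<le> N - card Bs}.
            g mD r * (Bin r (card Bs) e * Bin (mD - r) (N - card Bs) e))"
proof -
  let ?J = "{(mD, r). r \<le> mD \<and> mD \<le> N \<and> r \<le> card Bs \<and> mD - r \<le> N - card Bs}"
  let ?P = "Pi_pmf {..<N} False (\<lambda>_. bernoulli_pmf e)"
  have eq: "{j. j < N \<and> \<not> f j} = {x\<in>{..<N}. \<not> f x}" for f :: "nat \<Rightarrow> bool" by auto
  have finJ: "finite ?J" by (rule finite_subset[of _ "{..N} \<times> {..N}"]) auto
  have finB: "finite Bs" using Bs finite_subset by blast
  have "measure_pmf.expectation ?P (\<lambda>f. (\<lambda>(a, b). g a b) (card {j. j < N \<and> \<not> f j}, card ({j. j < N \<and> \<not> f j} \<inter> Bs)))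
      = (\<Sum>t\<in>?J. (\<lambda>(a, b). g a b) t * measure_pmf.prob ?P {f. (card {j. j < N \<and> \<not> f j}, card ({j. j < N \<and> \<not> f j} \<inter> Bs)) = t})"
  proof (rule expectation_finite_range[OF finJ])
    fix f :: "nat \<Rightarrow> bool"
    let ?A = "{j. j < N \<and> \<not> f j}"
    have fA: "finite ?A" by simp
    have c1: "card (?A \<inter> Bs) \<le> card ?A" by (rule card_mono) auto
    have c2: "card ?A \<le> N" using card_mono[of "{..<N}" ?A] by auto
    have c3: "card (?A \<inter> Bs) \<le> card Bs" by (rule card_mono[OF finB]) auto
    have "card ?A - card (?A \<inter> Bs) = card (?A - Bs)" by (simp add: card_Diff_subset_Int)
    also have "\<dots> \<le> card ({..<N} - Bs)" by (rule card_mono) auto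
    also have "\<dots> = N - card Bs" using Bs finB by (simp add: card_Diff_subset)
    finally have c4: "card ?A - card (?A \<inter> Bs) \<le> N - card Bs" .
    show "(card ?A, card (?A \<inter> Bs)) \<in> ?J" using c1 c2 c3 c4 by simp
  qed
  also have "\<dots> = (\<Sum>(mD, r)\<in>?J. g mD r * (Bin r (card Bs) e * Bin (mD - r) (N - card Bs) e))"
  proof (rule sum.cong[OF refl])
    fix t assume t: "t \<in> ?J"
    obtain mD r where tt: "t = (mD, r)" by (cases t)
    have r: "r \<le> mD" using t tt by simp
    have "measure_pmf.prob ?P {f. (card {j. j < N \<and> \<not> f j}, card ({j. j < N \<and> \<not> f j} \<inter> Bs)) = t}
        = measure_pmf.prob ?P {f. card {x\<in>{..<N}. \<not> f x} = mD \<and> card ({x\<in>{..<N}. \<not> f x} \<inter> Bs) = r}"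
      unfolding tt eq by simp
    also have "\<dots> = Bin r (card Bs) e * Bin (mD - r) (card {..<N} - card Bs) e"
      by (rule prob_card_bern2[OF finite_lessThan Bs e r])
    finally show "(\<lambda>(a, b). g a b) t * measure_pmf.prob ?P {f. (card {j. j < N \<and> \<not> f j}, card ({j. j < N \<and> \<not> f j} \<inter> Bs)) = t}
        = (\<lambda>(mD, r). g mD r * (Bin r (card Bs) e * Bin (mD - r) (N - card Bs) e)) t"
      using tt by simp
  qed
  finally show ?thesis by simp
qed


lemma weight:
  assumes "r \<le> m" "m \<le> NS" "r \<le> mD" "mD - r \<le> NS - m"
  shows "Bin m NS eSR * (Bin r m eSD * Bin (mD - r) (NS - m) eSD) = alpha NS eSR eSD m mD r"
proof -
  have ch: "real (NS choose r) * real ((NS - r) choose (m - r)) = real (NS choose m) * real (m choose r)"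
    using choose_mult[of r m NS] assms by (simp flip: of_nat_mult)
  have e2: "(1 - eSD) ^ mD = (1 - eSD) ^ r * (1 - eSD) ^ (mD - r)"
    using assms by (simp flip: power_add)
  have ex: "NS - mD = (m - r) + (NS - m - (mD - r))" using assms by arith
  have e3: "eSD ^ (NS - mD) = eSD ^ (m - r) * eSD ^ (NS - m - (mD - r))"
    unfolding ex power_add ..
  show ?thesis unfolding alpha_def ch e2 e3 Bin_def by (simp add: mult_ac)
qed

lemma final_algebra:
  fixes K NS NR q :: nat and eSD eSR eRD :: real
  defines "Q \<equiv> \<lambda>a m r m'. (\<Sum>i\<le>K. Prank q i a K * Pfull q (m - r) (K - i) * Pfull q m' (K - i))"
  defines "F \<equiv> \<lambda>a m r. (\<Sum>m'\<le>NR. Bin m' NR eRD * Q a m r m')"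
  defines "JJ \<equiv> \<lambda>m. {(mD, r). r \<le> mD \<and> mD \<le> NS \<and> r \<le> m \<and> mD - r \<le> NS - m}"
  shows "(\<Sum>m\<le>NS. Bin m NS eSR * (\<Sum>(mD, r)\<in>JJ m. F mD m r * (Bin r m eSD * Bin (mD - r) (NS - m) eSD)))
    = (\<Sum>(m, mD, mRD) \<in> {(m, mD, mRD). K \<le> m + mD \<and> m \<le> NS \<and> mD \<le> NS
                          \<and> m + mD - NS \<le> mRD \<and> mRD \<le> min m mD}.
       alpha NS eSR eSD m mD mRD *
       (\<Sum>m' \<in> {K - mD..NR}.
          Bin m' NR eRD * P2 q (m' + mD) (m - mRD + mD) mD K))"
proof -
  let ?Th = "{(m, mD, mRD). K \<le> m + mD \<and> m \<le> NS \<and> mD \<le> NS \<and> m + mD - NS \<le> mRD \<and> mRD \<le> min m mD}"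
  define T where "T = Sigma {..NS} JJ"
  have finJ: "finite (JJ m)" for m
    by (rule finite_subset[of _ "{..NS} \<times> {..NS}"]) (auto simp: JJ_def)
  have finT: "finite T" unfolding T_def using finJ by auto
  have "(\<Sum>m\<le>NS. Bin m NS eSR * (\<Sum>(mD, r)\<in>JJ m. F mD m r * (Bin r m eSD * Bin (mD - r) (NS - m) eSD)))
      = (\<Sum>m\<le>NS. \<Sum>(mD, r)\<in>JJ m. Bin m NS eSR * (F mD m r * (Bin r m eSD * Bin (mD - r) (NS - m) eSD)))"
    by (simp add: sum_distrib_left case_prod_unfold)
  also have "\<dots> = (\<Sum>(m, mDr)\<in>T. Bin m NS eSR * (F (fst mDr) m (snd mDr) * (Bin (snd mDr) m eSD * Bin (fst mDr - snd mDr) (NS - m) eSD)))"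
    unfolding T_def by (subst sum.Sigma) (auto simp: finJ case_prod_unfold)
  also have "\<dots> = (\<Sum>(m, mD, mRD)\<in>?Th. alpha NS eSR eSD m mD mRD *
       (\<Sum>m' \<in> {K - mD..NR}. Bin m' NR eRD * P2 q (m' + mD) (m - mRD + mD) mD K))"
  proof (rule sum.mono_neutral_cong_right[OF finT])
    show "?Th \<subseteq> T" unfolding T_def JJ_def by auto
    show "\<forall>t\<in>T - ?Th. (case t of (m, mDr) \<Rightarrow> Bin m NS eSR * (F (fst mDr) m (snd mDr) * (Bin (snd mDr) m eSD * Bin (fst mDr - snd mDr) (NS - m) eSD))) = 0"
    proof
      fix t assume t: "t \<in> T - ?Th"
      obtain m mD r where tt: "t = (m, mD, r)" by (cases t) auto
      have "m + mD < K" using t unfolding tt T_def JJ_def by auto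
      then have "F mD m r = 0" unfolding F_def Q_def using Q_zero2 by simp
      then show "(case t of (m, mDr) \<Rightarrow> Bin m NS eSR * (F (fst mDr) m (snd mDr) * (Bin (snd mDr) m eSD * Bin (fst mDr - snd mDr) (NS - m) eSD))) = 0"
        unfolding tt by simp
    qed
    show "(case t of (m, mDr) \<Rightarrow> Bin m NS eSR * (F (fst mDr) m (snd mDr) * (Bin (snd mDr) m eSD * Bin (fst mDr - snd mDr) (NS - m) eSD)))
        = (case t of (m, mD, mRD) \<Rightarrow> alpha NS eSR eSD m mD mRD * (\<Sum>m' \<in> {K - mD..NR}. Bin m' NR eRD * P2 q (m' + mD) (m - mRD + mD) mD K))"
      if t: "t \<in> ?Th" for t
    proof -
      obtain m mD r where tt: "t = (m, mD, r)" by (cases t) auto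
      have c: "K \<le> m + mD" "m \<le> NS" "mD \<le> NS" "m + mD - NS \<le> r" "r \<le> m" "r \<le> mD" using t tt by auto
      have "F mD m r = (\<Sum>m' \<in> {K - mD..NR}. Bin m' NR eRD * Q mD m r m')"
        unfolding F_def
      proof (rule sum.mono_neutral_right)
        show "{K - mD..NR} \<subseteq> {..NR}" by auto
        show "\<forall>i\<in>{..NR} - {K - mD..NR}. Bin i NR eRD * Q mD m r i = 0"
          unfolding Q_def using Q_zero1 by auto
      qed simp
      also have "\<dots> = (\<Sum>m' \<in> {K - mD..NR}. Bin m' NR eRD * P2 q (m' + mD) (m - r + mD) mD K)"
        unfolding Q_def using Q_P2[OF c(5,6)] by simp
      finally have eF: "F mD m r = (\<Sum>m' \<in> {K - mD..NR}. Bin m' NR eRD * P2 q (m' + mD) (m - r + mD) mD K)" .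
      have ew: "Bin m NS eSR * (Bin r m eSD * Bin (mD - r) (NS - m) eSD) = alpha NS eSR eSD m mD r"
        by (rule weight) (use c in auto)
      show ?thesis unfolding tt using eF ew by (simp add: mult_ac)
    qed
  qed
  finally show ?thesis .
qed


theorem mainTheorem4:
  fixes K NS NR :: nat and eSD eSR eRD :: real
  assumes "K \<ge> 1" and "NS \<ge> K" and "NR \<ge> 1"
    and "0 \<le> eSD" "eSD \<le> 1" and "0 \<le> eSR" "eSR \<le> 1" and "0 \<le> eRD" "eRD \<le> 1"
  shows "pmf (relay_success TYPE('a::{finite,field}) K NS NR eSD eSR eRD) True =
    (\<Sum>(m, mD, mRD) \<in> {(m, mD, mRD). K \<le> m + mD \<and> m \<le> NS \<and> mD \<le> NS
                          \<and> m + mD - NS \<le> mRD \<and> mRD \<le> min m mD}.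
       alpha NS eSR eSD m mD mRD *
       (\<Sum>m' \<in> {K - mD..NR}.
          Bin m' NR eRD * P2 CARD('a) (m' + mD) (m - mRD + mD) mD K))"
proof -
  interpret fvs "TYPE('a)" K .
  define q where "q = CARD('a)"
  define Q where "Q = (\<lambda>a m r m'. (\<Sum>i\<le>K. Prank q i a K * Pfull q (m - r) (K - i) * Pfull q m' (K - i)))"
  define F where "F = (\<lambda>a m r. (\<Sum>m'\<le>NR. Bin m' NR eRD * Q a m r m'))"
  define JJ where "JJ = (\<lambda>m. {(mD, r). r \<le> mD \<and> mD \<le> NS \<and> r \<le> m \<and> mD - r \<le> NS - m})"
  define H where "H = (\<lambda>m. (\<Sum>(mD, r)\<in>JJ m. F mD m r * (Bin r m eSD * Bin (mD - r) (NS - m) eSD)))"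
  define As where "As = (\<lambda>e1 :: nat \<Rightarrow> bool. {j. j < NS \<and> \<not> e1 j})"
  define Bs where "Bs = (\<lambda>e2 :: nat \<Rightarrow> bool. {j. j < NS \<and> \<not> e2 j})"
  define Rs where "Rs = (\<lambda>e3 :: nat \<Rightarrow> bool. {i. i < NR \<and> \<not> e3 i})"
  let ?P1 = "Pi_pmf {..<NS} False (\<lambda>_. bernoulli_pmf eSD)"
  let ?P2 = "Pi_pmf {..<NS} False (\<lambda>_. bernoulli_pmf eSR)"
  let ?P3 = "Pi_pmf {..<NR} False (\<lambda>_. bernoulli_pmf eRD)"
  have inner: "pmf (bind_pmf (pmf_of_set (carrier_mat NS K :: 'a mat set)) (\<lambda>C.
            bind_pmf (pmf_of_set (carrier_mat NR (length (filter (\<lambda>j. \<not> e2 j) [0..<NS])) :: 'a mat set)) (\<lambda>G.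
              return_pmf (row_rank K (mat_of_rows K (sel_rows K C (filter (\<lambda>j. \<not> e1 j) [0..<NS])
                @ sel_rows K (G * mat_of_rows K (sel_rows K C (filter (\<lambda>j. \<not> e2 j) [0..<NS]))) (filter (\<lambda>i. \<not> e3 i) [0..<NR]))) = K)))) True
      = Q (card (As e1)) (card (Bs e2)) (card (As e1 \<inter> Bs e2)) (card (Rs e3))" for e1 e2 e3
  proof -
    have cd: "card (Bs e2 - As e1) = card (Bs e2) - card (As e1 \<inter> Bs e2)"
      by (subst card_Diff_subset_Int) (auto simp: Bs_def Int_commute)
    have ip: "pmf (bind_pmf (pmf_of_set (carrier_mat NS K :: 'a mat set)) (\<lambda>C.
            bind_pmf (pmf_of_set (carrier_mat NR (length (filter (\<lambda>j. \<not> e2 j) [0..<NS])) :: 'a mat set)) (\<lambda>G.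
              return_pmf (row_rank K (mat_of_rows K (sel_rows K C (filter (\<lambda>j. \<not> e1 j) [0..<NS])
                @ sel_rows K (G * mat_of_rows K (sel_rows K C (filter (\<lambda>j. \<not> e2 j) [0..<NS]))) (filter (\<lambda>i. \<not> e3 i) [0..<NR]))) = K)))) True
      = (\<Sum>i\<le>K. Prank CARD('a) i (card (As e1)) K * Pfull CARD('a) (card (Bs e2 - As e1)) (K - i)
           * Pfull CARD('a) (card (Rs e3)) (K - i))"
      unfolding As_def Bs_def Rs_def by (rule inner_prob)
    then show ?thesis unfolding cd Q_def q_def .
  qed
  have E3: "measure_pmf.expectation ?P3 (\<lambda>e3. Q a m r (card (Rs e3))) = F a m r" for a m r
    using exp_card_bern[of eRD NR "Q a m r"] assms unfolding Rs_def F_def by (simp add: mult_ac)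
  have E1: "measure_pmf.expectation ?P1 (\<lambda>e1. F (card (As e1)) (card (Bs e2)) (card (As e1 \<inter> Bs e2))) = H (card (Bs e2))" for e2
    using exp_card_bern2[of eSD "Bs e2" NS "\<lambda>a r. F a (card (Bs e2)) r"] assms
    unfolding As_def H_def JJ_def by (auto simp: Bs_def)
  have E2: "measure_pmf.expectation ?P2 (\<lambda>e2. H (card (Bs e2))) = (\<Sum>m\<le>NS. Bin m NS eSR * H m)"
    using exp_card_bern[of eSR NS H] assms unfolding Bs_def by simp
  have "pmf (relay_success TYPE('a) K NS NR eSD eSR eRD) True
      = measure_pmf.expectation ?P2 (\<lambda>e2. measure_pmf.expectation ?P1 (\<lambda>e1. measure_pmf.expectation ?P3 (\<lambda>e3.
          Q (card (As e1)) (card (Bs e2)) (card (As e1 \<inter> Bs e2)) (card (Rs e3)))))"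
    unfolding M1 pmf_bind[of ?P2] pmf_bind[of ?P1] pmf_bind[of ?P3] inner ..
  also have "\<dots> = measure_pmf.expectation ?P2 (\<lambda>e2. measure_pmf.expectation ?P1 (\<lambda>e1. F (card (As e1)) (card (Bs e2)) (card (As e1 \<inter> Bs e2))))"
    unfolding E3 ..
  also have "\<dots> = measure_pmf.expectation ?P2 (\<lambda>e2. H (card (Bs e2)))"
    unfolding E1 ..
  also have "\<dots> = (\<Sum>m\<le>NS. Bin m NS eSR * H m)" by (rule E2)
  also have "\<dots> = (\<Sum>(m, mD, mRD) \<in> {(m, mD, mRD). K \<le> m + mD \<and> m \<le> NS \<and> mD \<le> NS
                          \<and> m + mD - NS \<le> mRD \<and> mRD \<le> min m mD}.
       alpha NS eSR eSD m mD mRD *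
       (\<Sum>m' \<in> {K - mD..NR}.
          Bin m' NR eRD * P2 CARD('a) (m' + mD) (m - mRD + mD) mD K))"
    unfolding H_def F_def Q_def JJ_def q_def by (rule final_algebra)
  finally show ?thesis .
qed


end
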